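(* Let $W$ be the affine Weyl group of an irreducible reduced crystallographic root system of rank 2, with simple generators $s_0,s_1,s_2$ and $W_0=\langle s_1,s_2\rangle$. Let $H_{r_0},H_{r_1}$ be adjacent parallel hyperplanes ($H_{\alpha,c}$ and $H_{\alpha,c+1}$ for some root $\alpha$, $c\in\mathbb{Z}$) and suppose both the alcove $w\in W$ and the identity alcove lie in the strip between them. Suppose $D_R(w)=\{0,i\}$ with $i\in\{1,2\}$. If $(s_0s_i)^2\neq 1$, then $ws_i$ is the minimal length element of the coset $wW_0$.
   Context: $W$ is generated by the reflections in the lines $H_{\beta,k}=\{v:\langle v,\beta\rangle=k\}$ ($\beta$ a root, $k\in\mathbb{Z}$) in a Euclidean plane; its simple generators $s_0,s_1,s_2$ are the reflections in the walls of the fundamental alcove $A_0$, $s_0$ being the reflection in the wall not through the origin, and $W_0=\langle s_1,s_2\rangle$. Elements are identified with alcoves via $w\mapsto wA_0$. $\ell$ is Coxeter length; $D_R(w)=\{j:\ell(ws_j)<\ell(w)\}$. *)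

theory Defs
  imports "HOL-Analysis.Analysis"
begin

type_synonym vec2 = "real ^ 2"

definition root_system :: "vec2 set \<Rightarrow> bool" where
  "root_system R \<longleftrightarrow>
     finite R \<and> 0 \<notin> R \<and> span R = UNIV \<and>
     (\<forall>\<alpha>\<in>R. \<forall>\<beta>\<in>R. \<beta> - (2 * (\<beta> \<bullet> \<alpha>) / (\<alpha> \<bullet> \<alpha>)) *\<^sub>R \<alpha> \<in> R) \<and>
     (\<forall>\<alpha>\<in>R. \<forall>\<beta>\<in>R. 2 * (\<beta> \<bullet> \<alpha>) / (\<alpha> \<bullet> \<alpha>) \<in> \<int>) \<and>
     (\<forall>\<alpha>\<in>R. \<forall>c::real. c *\<^sub>R \<alpha> \<in> R \<longrightarrow> c = 1 \<or> c = -1) \<and>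
     \<not> (\<exists>R1 R2. R1 \<noteq> {} \<and> R2 \<noteq> {} \<and> R1 \<union> R2 = R \<and> R1 \<inter> R2 = {} \<and>
                 (\<forall>a\<in>R1. \<forall>b\<in>R2. a \<bullet> b = 0))"

definition hyp :: "vec2 \<Rightarrow> int \<Rightarrow> vec2 set" where
  "hyp \<beta> k = {v. v \<bullet> \<beta> = of_int k}"

definition refl :: "vec2 \<Rightarrow> int \<Rightarrow> vec2 \<Rightarrow> vec2" where
  "refl \<beta> k v = v - ((v \<bullet> \<beta> - of_int k) * (2 / (\<beta> \<bullet> \<beta>))) *\<^sub>R \<beta>"

definition hyperplanes :: "vec2 set \<Rightarrow> vec2 set set" where
  "hyperplanes R = {H. \<exists>\<beta>\<in>R. \<exists>k::int. H = hyp \<beta> k}"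

definition alcove :: "vec2 set \<Rightarrow> vec2 set \<Rightarrow> bool" where
  "alcove R A \<longleftrightarrow> A \<in> components (UNIV - \<Union>(hyperplanes R))"

text \<open>A wall of an alcove: a hyperplane of the arrangement meeting the closure
  of the alcove in more than one point (i.e. in an edge).\<close>
definition wall :: "vec2 set \<Rightarrow> vec2 set \<Rightarrow> vec2 set \<Rightarrow> bool" where
  "wall R A H \<longleftrightarrow> H \<in> hyperplanes R \<and>
     (\<exists>p q. p \<noteq> q \<and> p \<in> H \<inter> closure A \<and> q \<in> H \<inter> closure A)"

inductive_set affW :: "vec2 set \<Rightarrow> (vec2 \<Rightarrow> vec2) set" for R where
  id: "id \<in> affW R"
| step: "\<beta> \<in> R \<Longrightarrow> w \<in> affW R \<Longrightarrow> refl \<beta> k \<circ> w \<in> affW R"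

definition simple_system :: "vec2 set \<Rightarrow> vec2 set \<Rightarrow> (nat \<Rightarrow> vec2 \<Rightarrow> vec2) \<Rightarrow> bool" where
  "simple_system R A0 s \<longleftrightarrow> alcove R A0 \<and> 0 \<in> closure A0 \<and>
     (\<exists>\<beta>0 \<beta>1 \<beta>2 (k0::int). \<beta>0 \<in> R \<and> \<beta>1 \<in> R \<and> \<beta>2 \<in> R \<and> k0 \<noteq> 0 \<and>
        wall R A0 (hyp \<beta>0 k0) \<and> wall R A0 (hyp \<beta>1 0) \<and> wall R A0 (hyp \<beta>2 0) \<and>
        hyp \<beta>1 0 \<noteq> hyp \<beta>2 0 \<and>
        s 0 = refl \<beta>0 k0 \<and> s 1 = refl \<beta>1 0 \<and> s 2 = refl \<beta>2 0)"

definition word :: "(nat \<Rightarrow> vec2 \<Rightarrow> vec2) \<Rightarrow> nat list \<Rightarrow> vec2 \<Rightarrow> vec2" where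
  "word s js = foldr (\<lambda>j f. s j \<circ> f) js id"

definition len :: "(nat \<Rightarrow> vec2 \<Rightarrow> vec2) \<Rightarrow> (vec2 \<Rightarrow> vec2) \<Rightarrow> nat" where
  "len s w = (LEAST n. \<exists>js. length js = n \<and> set js \<subseteq> {0,1,2} \<and> w = word s js)"

definition right_descents :: "(nat \<Rightarrow> vec2 \<Rightarrow> vec2) \<Rightarrow> (vec2 \<Rightarrow> vec2) \<Rightarrow> nat set" where
  "right_descents s w = {j \<in> {0,1,2}. len s (w \<circ> s j) < len s w}"

definition W0 :: "(nat \<Rightarrow> vec2 \<Rightarrow> vec2) \<Rightarrow> (vec2 \<Rightarrow> vec2) set" where
  "W0 s = {word s js | js. set js \<subseteq> {1,2}}"

definition strip :: "vec2 \<Rightarrow> int \<Rightarrow> vec2 set" where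
  "strip \<alpha> c = {v. of_int c < v \<bullet> \<alpha> \<and> v \<bullet> \<alpha> < of_int c + 1}"

end

theory Submission
  imports Defs
begin


lemma refl_inner:
  "refl \<beta> k v \<bullet> \<gamma> - of_int m =
     v \<bullet> (\<gamma> - (2*(\<gamma>\<bullet>\<beta>)/(\<beta>\<bullet>\<beta>)) *\<^sub>R \<beta>) - (of_int m - of_int k * (2*(\<gamma>\<bullet>\<beta>)/(\<beta>\<bullet>\<beta>)))"
  unfolding refl_def
  by (cases "\<beta>\<bullet>\<beta> = 0") (simp_all add: inner_diff_left inner_diff_right inner_commute algebra_simps diff_divide_distrib add_divide_distrib)

lemma refl_inner_self:
  assumes "\<beta> \<noteq> 0"
  shows "refl \<beta> k v \<bullet> \<beta> - of_int k = - (v \<bullet> \<beta> - of_int k)"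
  using assms unfolding refl_def
  by (simp add: inner_diff_left algebra_simps diff_divide_distrib)

lemma refl_invol:
  assumes "\<beta> \<noteq> 0"
  shows "refl \<beta> k (refl \<beta> k v) = v"
proof -
  have e: "refl \<beta> k u = u - ((u \<bullet> \<beta> - of_int k) * (2 / (\<beta> \<bullet> \<beta>))) *\<^sub>R \<beta>" for u
    by (simp add: refl_def)
  have "(refl \<beta> k v \<bullet> \<beta> - of_int k) * (2 / (\<beta> \<bullet> \<beta>)) = - ((v \<bullet> \<beta> - of_int k) * (2 / (\<beta> \<bullet> \<beta>)))"
    using refl_inner_self[OF assms, of k v] by (metis minus_mult_left)
  then have "refl \<beta> k (refl \<beta> k v) = refl \<beta> k v + ((v \<bullet> \<beta> - of_int k) * (2 / (\<beta> \<bullet> \<beta>))) *\<^sub>R \<beta>"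
    by (subst e) simp
  also have "\<dots> = v" by (subst e) simp
  finally show ?thesis .
qed

lemma refl_invol_comp:
  assumes "\<beta> \<noteq> 0"
  shows "refl \<beta> k \<circ> refl \<beta> k = id"
  using refl_invol[OF assms] by auto

lemma refl_fix:
  assumes "v \<in> hyp \<beta> k"
  shows "refl \<beta> k v = v"
  using assms by (simp add: refl_def hyp_def)

lemma refl_zero_fix: "refl \<beta> 0 0 = 0"
  by (simp add: refl_def)

lemma refl_scale:
  assumes "c \<noteq> 0" "of_int k' = c * of_int k"
  shows "refl (c *\<^sub>R \<beta>) k' = refl \<beta> k"
proof
  fix v
  have "((v \<bullet> (c *\<^sub>R \<beta>) - of_int k') * (2 / ((c *\<^sub>R \<beta>) \<bullet> (c *\<^sub>R \<beta>)))) *\<^sub>R (c *\<^sub>R \<beta>)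
      = ((v \<bullet> \<beta> - of_int k) * (2 / (\<beta> \<bullet> \<beta>))) *\<^sub>R \<beta>"
    using assms by (cases "\<beta> = 0") (simp_all add: algebra_simps power2_eq_square diff_divide_distrib)
  then show "refl (c *\<^sub>R \<beta>) k' v = refl \<beta> k v" by (simp add: refl_def)
qed

lemma refl_conj:
  assumes "\<delta> \<noteq> 0" "\<gamma> \<noteq> 0"
    and "n = 2*(\<gamma>\<bullet>\<delta>)/(\<delta>\<bullet>\<delta>)"
    and "of_int m' = of_int m - of_int e * n"
  shows "refl \<delta> e (refl \<gamma> m v) = refl (\<gamma> - n *\<^sub>R \<delta>) m' (refl \<delta> e v)"
proof -
  define \<gamma>' where "\<gamma>' = \<gamma> - n *\<^sub>R \<delta>"
  have dd: "\<delta> \<bullet> \<delta> \<noteq> 0" using assms(1) by simp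
  have gg: "\<gamma>' \<bullet> \<gamma>' = \<gamma> \<bullet> \<gamma>"
    unfolding \<gamma>'_def assms(3) using dd
    by (simp add: inner_diff_left inner_diff_right inner_commute algebra_simps power2_eq_square)
  have n': "2*(\<gamma>'\<bullet>\<delta>)/(\<delta>\<bullet>\<delta>) = - n"
    unfolding \<gamma>'_def assms(3) using dd
    by (simp add: inner_diff_left field_simps)
  have t0: "refl \<delta> e v \<bullet> \<gamma>' - of_int m' = v \<bullet> (\<gamma>' - (- n) *\<^sub>R \<delta>) - (of_int m' - of_int e * (- n))"
    using refl_inner[of \<delta> e v \<gamma>' m'] n' by simp
  have t: "refl \<delta> e v \<bullet> \<gamma>' - of_int m' = v \<bullet> \<gamma> - of_int m"
    unfolding t0 unfolding \<gamma>'_def using assms(4) by (simp add: algebra_simps)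
  have "refl \<gamma>' m' (refl \<delta> e v) = refl \<delta> e v - ((v \<bullet> \<gamma> - of_int m) * (2 / (\<gamma> \<bullet> \<gamma>))) *\<^sub>R \<gamma>'"
    by (simp add: refl_def gg t[symmetric])
  also have "\<dots> = refl \<delta> e (refl \<gamma> m v)"
    unfolding refl_def \<gamma>'_def assms(3) using dd
    by (simp add: inner_diff_left inner_diff_right inner_commute algebra_simps)
       (simp add: diff_divide_distrib scaleR_diff_left)
  finally show ?thesis unfolding \<gamma>'_def ..
qed




definition det2 :: "vec2 \<Rightarrow> vec2 \<Rightarrow> real" where
  "det2 x y = x$1 * y$2 - x$2 * y$1"

lemma inner2: "(x::vec2) \<bullet> y = x$1 * y$1 + x$2 * y$2"
  by (simp add: inner_vec_def sum_2)

lemma vec2_eqI: "x$1 = y$1 \<Longrightarrow> x$2 = y$2 \<Longrightarrow> (x::vec2) = y"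
  by (simp add: vec_eq_iff forall_2)

lemma vec2_nz: "(x::vec2) \<noteq> 0 \<Longrightarrow> x$1 \<noteq> 0 \<or> x$2 \<noteq> 0"
  by (auto simp: vec_eq_iff forall_2)

lemma det2_zero_par:
  assumes "\<beta> \<noteq> 0" "det2 \<beta> \<gamma> = 0"
  shows "\<gamma> = ((\<gamma> \<bullet> \<beta>)/(\<beta> \<bullet> \<beta>)) *\<^sub>R \<beta>"
proof -
  have bb: "\<beta> \<bullet> \<beta> \<noteq> 0" using assms by simp
  have d: "\<beta>$1 * \<gamma>$2 = \<beta>$2 * \<gamma>$1" using assms(2) by (simp add: det2_def)
  have bb2: "\<beta>$1*\<beta>$1 + \<beta>$2*\<beta>$2 \<noteq> 0" using bb by (simp add: inner2)
  have 1: "\<gamma>$1 * (\<beta>$1*\<beta>$1 + \<beta>$2*\<beta>$2) = (\<gamma>$1*\<beta>$1 + \<gamma>$2*\<beta>$2) * \<beta>$1"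
    using d by (simp add: algebra_simps)
  have 2: "\<gamma>$2 * (\<beta>$1*\<beta>$1 + \<beta>$2*\<beta>$2) = (\<gamma>$1*\<beta>$1 + \<gamma>$2*\<beta>$2) * \<beta>$2"
    using d by (simp add: algebra_simps)
  show ?thesis
    apply (rule vec2_eqI)
    using 1 2 bb2 by (simp_all add: inner2 field_simps)
qed

lemma perp_det2:
  assumes "d \<noteq> 0" "\<beta> \<bullet> d = 0" "\<gamma> \<bullet> d = 0"
  shows "det2 \<beta> \<gamma> = 0"
proof -
  have h1: "\<beta>$1*d$1 + \<beta>$2*d$2 = 0" and h2: "\<gamma>$1*d$1 + \<gamma>$2*d$2 = 0"
    using assms by (simp_all add: inner2)
  have a: "det2 \<beta> \<gamma> * d$2 = \<beta>$1*(\<gamma>$1*d$1 + \<gamma>$2*d$2) - \<gamma>$1*(\<beta>$1*d$1 + \<beta>$2*d$2)"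
    unfolding det2_def by algebra
  have b: "det2 \<beta> \<gamma> * d$1 = \<gamma>$2*(\<beta>$1*d$1 + \<beta>$2*d$2) - \<beta>$2*(\<gamma>$1*d$1 + \<gamma>$2*d$2)"
    unfolding det2_def by algebra
  show ?thesis using a b h1 h2 vec2_nz[OF assms(1)] by auto
qed

lemma hyp_two_points:
  assumes "\<beta> \<noteq> 0" "\<gamma> \<noteq> 0" "p \<noteq> q"
    and "p \<in> hyp \<beta> k" "q \<in> hyp \<beta> k" "p \<in> hyp \<gamma> m" "q \<in> hyp \<gamma> m"
  shows "hyp \<beta> k = hyp \<gamma> m"
proof -
  have "det2 \<beta> \<gamma> = 0"
    by (rule perp_det2[of "p - q"]) (use assms in \<open>auto simp: hyp_def inner_diff_right inner_commute\<close>)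
  then have g: "\<gamma> = ((\<gamma> \<bullet> \<beta>)/(\<beta> \<bullet> \<beta>)) *\<^sub>R \<beta>" by (rule det2_zero_par[OF assms(1)])
  define c where "c = (\<gamma> \<bullet> \<beta>)/(\<beta> \<bullet> \<beta>)"
  have c0: "c \<noteq> 0" using assms(2) g unfolding c_def by (metis scaleR_zero_left)
  have km: "of_int m = c * of_int k"
    using assms(4,6) g unfolding c_def hyp_def by (metis (mono_tags, lifting) inner_commute inner_scaleR_right mem_Collect_eq)
  show ?thesis
  proof (intro set_eqI iffI)
    fix x assume "x \<in> hyp \<beta> k" then show "x \<in> hyp \<gamma> m"
      using km g unfolding c_def[symmetric] hyp_def by (simp add: inner_commute)
  next
    fix x assume "x \<in> hyp \<gamma> m" then show "x \<in> hyp \<beta> k"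
      using km g c0 unfolding c_def[symmetric] hyp_def
      by (simp add: inner_commute)
  qed
qed

lemma hyp_eq_scale:
  assumes "\<beta> \<noteq> 0" "\<gamma> \<noteq> 0" "hyp \<beta> k = hyp \<gamma> m"
  shows "\<exists>c. c \<noteq> 0 \<and> \<gamma> = c *\<^sub>R \<beta> \<and> of_int m = c * of_int k"
proof -
  define p where "p = (of_int k / (\<beta> \<bullet> \<beta>)) *\<^sub>R \<beta>"
  define r where "r = (vector [- \<beta>$2, \<beta>$1] :: vec2)"
  have r1: "r$1 = - \<beta>$2" and r2: "r$2 = \<beta>$1" by (simp_all add: r_def)
  have rn: "r \<noteq> 0" using vec2_nz[OF assms(1)] r1 r2 by auto
  have p: "p \<in> hyp \<beta> k" using assms(1) by (simp add: p_def hyp_def inner_commute)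
  have br: "r \<bullet> \<beta> = 0" by (simp add: inner2 r1 r2)
  have pr: "p + r \<in> hyp \<beta> k" using p br by (simp add: hyp_def inner_add_left)
  have pr2: "p \<noteq> p + r" using rn by simp
  have hg: "p \<in> hyp \<gamma> m" "p + r \<in> hyp \<gamma> m" using p pr assms(3) by auto
  have "det2 \<beta> \<gamma> = 0"
    by (rule perp_det2[of r]) (use rn br hg in \<open>auto simp: hyp_def inner_add_left inner_add_right inner_commute\<close>)
  then have g: "\<gamma> = ((\<gamma> \<bullet> \<beta>)/(\<beta> \<bullet> \<beta>)) *\<^sub>R \<beta>" by (rule det2_zero_par[OF assms(1)])
  define c where "c = (\<gamma> \<bullet> \<beta>)/(\<beta> \<bullet> \<beta>)"
  have c0: "c \<noteq> 0" using assms(2) g unfolding c_def by (metis scaleR_zero_left)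
  have km: "of_int m = c * of_int k"
    using p hg(1) g unfolding c_def hyp_def by (metis (mono_tags, lifting) inner_commute inner_scaleR_right mem_Collect_eq)
  show ?thesis using c0 km g unfolding c_def by blast
qed

lemma hyp_eq_refl:
  assumes "\<beta> \<noteq> 0" "\<gamma> \<noteq> 0" "hyp \<beta> k = hyp \<gamma> m"
  shows "refl \<gamma> m = refl \<beta> k"
  using hyp_eq_scale[OF assms] refl_scale by metis

lemma det2_coeffs:
  assumes "det2 e f \<noteq> 0"
  shows "v = (det2 v f / det2 e f) *\<^sub>R e + (det2 e v / det2 e f) *\<^sub>R f"
proof -
  have "det2 e f *\<^sub>R v = det2 v f *\<^sub>R e + det2 e v *\<^sub>R f"
    by (rule vec2_eqI) (simp_all add: det2_def algebra_simps)
  then have "v = inverse (det2 e f) *\<^sub>R (det2 v f *\<^sub>R e + det2 e v *\<^sub>R f)"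
    using assms by (metis scaleR_left_imp_eq scaleR_scaleR right_inverse scaleR_one)
  then show ?thesis by (simp add: scaleR_add_right divide_inverse_commute)
qed

lemma det2_determined:
  assumes "det2 e f \<noteq> 0" "x \<bullet> e = y \<bullet> e" "x \<bullet> f = y \<bullet> f"
  shows "x = y"
proof -
  have "(x - y) \<bullet> e = 0" "(x - y) \<bullet> f = 0" using assms by (simp_all add: inner_diff_left)
  then have "x - y = 0" using perp_det2[of "x - y" e f] assms(1) by (auto simp: inner_commute)
  then show ?thesis by simp
qed

lemma lagrange2: "(e \<bullet> e) * (f \<bullet> f) - (e \<bullet> f)^2 = (det2 e f)^2"
  by (simp add: inner2 det2_def power2_eq_square algebra_simps)

lemma det2_nonpar:
  assumes "\<beta> \<noteq> 0" "\<gamma> \<noteq> 0" "hyp \<beta> 0 \<noteq> hyp \<gamma> 0"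
  shows "det2 \<beta> \<gamma> \<noteq> 0"
proof
  assume "det2 \<beta> \<gamma> = 0"
  then have g: "\<gamma> = ((\<gamma> \<bullet> \<beta>)/(\<beta> \<bullet> \<beta>)) *\<^sub>R \<beta>" by (rule det2_zero_par[OF assms(1)])
  define c where "c = (\<gamma> \<bullet> \<beta>)/(\<beta> \<bullet> \<beta>)"
  have c0: "c \<noteq> 0" using assms(2) g unfolding c_def by (metis scaleR_zero_left)
  have "hyp \<beta> 0 = hyp \<gamma> 0" using g c0 unfolding c_def[symmetric] hyp_def by (auto simp: inner_commute)
  then show False using assms(3) by simp
qed




lemma word_Nil[simp]: "word s [] = id" by (simp add: word_def)
lemma word_Cons[simp]: "word s (j # js) = s j \<circ> word s js" by (simp add: word_def)
lemma word_append: "word s (xs @ ys) = word s xs \<circ> word s ys"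
  by (induction xs) (auto simp: word_def)

definition sepH :: "vec2 set \<Rightarrow> vec2 \<Rightarrow> vec2 \<Rightarrow> bool" where
  "sepH H x y \<longleftrightarrow> (\<exists>\<beta> k. \<beta> \<noteq> 0 \<and> H = hyp \<beta> k \<and> (x \<bullet> \<beta> - of_int k) * (y \<bullet> \<beta> - of_int k) < 0)"

lemma sepH_hyp:
  assumes "\<beta> \<noteq> 0"
  shows "sepH (hyp \<beta> k) x y \<longleftrightarrow> (x \<bullet> \<beta> - of_int k) * (y \<bullet> \<beta> - of_int k) < 0"
proof
  assume "sepH (hyp \<beta> k) x y"
  then obtain \<beta>' k' where b: "\<beta>' \<noteq> 0" "hyp \<beta> k = hyp \<beta>' k'"
    "(x \<bullet> \<beta>' - of_int k') * (y \<bullet> \<beta>' - of_int k') < 0" unfolding sepH_def by blast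
  obtain c where c: "c \<noteq> 0" "\<beta>' = c *\<^sub>R \<beta>" "of_int k' = c * of_int k"
    using hyp_eq_scale[OF assms b(1,2)] by blast
  have "(x \<bullet> \<beta>' - of_int k') * (y \<bullet> \<beta>' - of_int k') = (c*c) * ((x \<bullet> \<beta> - of_int k) * (y \<bullet> \<beta> - of_int k))"
    using c by (simp add: algebra_simps)
  moreover have "c * c > 0" using c(1) not_real_square_gt_zero by blast
  ultimately show "(x \<bullet> \<beta> - of_int k) * (y \<bullet> \<beta> - of_int k) < 0"
    using b(3) by (auto simp: mult_less_0_iff)
next
  assume "(x \<bullet> \<beta> - of_int k) * (y \<bullet> \<beta> - of_int k) < 0"
  then show "sepH (hyp \<beta> k) x y" using assms unfolding sepH_def by blast
qed

locale aff =
  fixes R :: "vec2 set" and s :: "nat \<Rightarrow> vec2 \<Rightarrow> vec2"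
  assumes rs: "root_system R"
    and sgen: "\<forall>j\<in>{0,1,2}. \<exists>\<beta>\<in>R. \<exists>k::int. s j = refl \<beta> k"
begin

lemma R_finite: "finite R" using rs by (simp add: root_system_def)
lemma R_nz: "\<alpha> \<in> R \<Longrightarrow> \<alpha> \<noteq> 0" using rs by (auto simp: root_system_def)
lemma R_refl: "\<alpha> \<in> R \<Longrightarrow> \<beta> \<in> R \<Longrightarrow> \<beta> - (2 * (\<beta> \<bullet> \<alpha>) / (\<alpha> \<bullet> \<alpha>)) *\<^sub>R \<alpha> \<in> R"
  using rs by (simp add: root_system_def)
lemma R_int: "\<alpha> \<in> R \<Longrightarrow> \<beta> \<in> R \<Longrightarrow> 2 * (\<beta> \<bullet> \<alpha>) / (\<alpha> \<bullet> \<alpha>) \<in> \<int>"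
  using rs by (simp add: root_system_def)
lemma R_reduced: "\<alpha> \<in> R \<Longrightarrow> c *\<^sub>R \<alpha> \<in> R \<Longrightarrow> c = 1 \<or> c = -1"
  using rs by (simp add: root_system_def)
lemma R_neg: "\<alpha> \<in> R \<Longrightarrow> - \<alpha> \<in> R"
proof -
  assume a: "\<alpha> \<in> R"
  have "\<alpha> \<bullet> \<alpha> \<noteq> 0" using R_nz[OF a] by simp
  then have eq2: "2 * (\<alpha> \<bullet> \<alpha>) / (\<alpha> \<bullet> \<alpha>) = 2" by simp
  have e2: "\<alpha> - (2::real) *\<^sub>R \<alpha> = - \<alpha>" by (simp add: scaleR_2)
  from R_refl[OF a a] show ?thesis unfolding eq2 e2 .
qed

lemma s_refl: "j \<in> {0,1,2} \<Longrightarrow> \<exists>\<beta>\<in>R. \<exists>k::int. s j = refl \<beta> k"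
  using sgen by blast

lemma s_invol: "j \<in> {0,1,2} \<Longrightarrow> s j (s j x) = x"
  using s_refl refl_invol R_nz by metis

lemma s_invol_comp: "j \<in> {0,1,2} \<Longrightarrow> s j \<circ> s j = id"
  using s_invol by auto

definition G :: "(vec2 \<Rightarrow> vec2) set" where
  "G = {word s js | js. set js \<subseteq> {0,1,2}}"

lemma refl_transfer1:
  assumes "\<beta> \<in> R" "\<gamma> \<in> R"
  shows "\<exists>\<gamma>'\<in>R. \<exists>m'::int. \<forall>x. refl \<beta> k x \<bullet> \<gamma> - of_int m = x \<bullet> \<gamma>' - of_int m'"
proof -
  obtain z where z: "2 * (\<gamma> \<bullet> \<beta>) / (\<beta> \<bullet> \<beta>) = of_int z" using R_int[OF assms] by (metis Ints_cases)
  show ?thesis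
    apply (rule bexI[of _ "\<gamma> - (2 * (\<gamma> \<bullet> \<beta>) / (\<beta> \<bullet> \<beta>)) *\<^sub>R \<beta>"])
     apply (rule exI[of _ "m - k * z"])
    using refl_inner[of \<beta> k _ \<gamma> m] z R_refl[OF assms] by auto
qed

lemma word_transfer:
  assumes "set js \<subseteq> {0,1,2}" "\<gamma> \<in> R"
  shows "\<exists>\<gamma>'\<in>R. \<exists>m'::int. \<forall>x. word s js x \<bullet> \<gamma> - of_int m = x \<bullet> \<gamma>' - of_int m'"
  using assms
proof (induction js arbitrary: \<gamma> m)
  case Nil then show ?case by auto
next
  case (Cons j js)
  have j: "j \<in> {0,1,2}" using Cons.prems(1) by auto
  obtain \<beta> k where bk: "\<beta> \<in> R" "s j = refl \<beta> k" using s_refl[OF j] by blast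
  obtain \<gamma>1 m1 where g1: "\<gamma>1 \<in> R" "\<forall>y. refl \<beta> k y \<bullet> \<gamma> - of_int m = y \<bullet> \<gamma>1 - of_int m1"
    using refl_transfer1[OF bk(1) Cons.prems(2)] by blast
  obtain \<gamma>2 m2 where g2: "\<gamma>2 \<in> R" "\<forall>x. word s js x \<bullet> \<gamma>1 - of_int m1 = x \<bullet> \<gamma>2 - of_int m2"
    using Cons.IH[of \<gamma>1 m1] Cons.prems g1(1) by auto
  have "\<forall>x. word s (j # js) x \<bullet> \<gamma> - of_int m = x \<bullet> \<gamma>2 - of_int m2"
  proof
    fix x
    have "word s (j # js) x = refl \<beta> k (word s js x)" by (simp add: bk)
    moreover have "refl \<beta> k (word s js x) \<bullet> \<gamma> - of_int m = word s js x \<bullet> \<gamma>1 - of_int m1"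
      using g1(2) by blast
    moreover have "word s js x \<bullet> \<gamma>1 - of_int m1 = x \<bullet> \<gamma>2 - of_int m2" using g2(2) by blast
    ultimately show "word s (j # js) x \<bullet> \<gamma> - of_int m = x \<bullet> \<gamma>2 - of_int m2" by simp
  qed
  then have "\<exists>m'::int. \<forall>x. word s (j # js) x \<bullet> \<gamma> - of_int m = x \<bullet> \<gamma>2 - of_int m'"
    by (rule exI)
  then show ?case using g2(1) by (rule bexI)
qed

lemma G_transfer:
  assumes "u \<in> G" "\<gamma> \<in> R"
  shows "\<exists>\<gamma>'\<in>R. \<exists>m'::int. \<forall>x. u x \<bullet> \<gamma> - of_int m = x \<bullet> \<gamma>' - of_int m'"
proof -
  obtain js where "u = word s js" "set js \<subseteq> {0,1,2}" using assms(1) unfolding G_def by blast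
  then show ?thesis using word_transfer[of js \<gamma> m] assms(2) by simp
qed

lemma transfer_preimage:
  assumes "\<forall>x. u x \<bullet> \<gamma> - of_int m = x \<bullet> \<gamma>' - of_int m'"
  shows "u -` hyp \<gamma> m = hyp \<gamma>' m'"
proof (intro set_eqI)
  fix x
  have "u x \<bullet> \<gamma> - of_int m = x \<bullet> \<gamma>' - of_int m'" using assms by blast
  then have e: "u x \<bullet> \<gamma> = x \<bullet> \<gamma>' - of_int m' + of_int m" by linarith
  show "x \<in> u -` hyp \<gamma> m \<longleftrightarrow> x \<in> hyp \<gamma>' m'" by (simp add: hyp_def e)
qed

lemma G_preimage:
  assumes "u \<in> G" "H \<in> hyperplanes R"
  shows "u -` H \<in> hyperplanes R"
proof -
  obtain \<gamma> m where H: "\<gamma> \<in> R" "H = hyp \<gamma> m" using assms(2) unfolding hyperplanes_def by blast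
  obtain \<gamma>' m' where g: "\<gamma>' \<in> R" "\<forall>x. u x \<bullet> \<gamma> - of_int m = x \<bullet> \<gamma>' - of_int m'"
    using G_transfer[OF assms(1) H(1)] by blast
  have "u -` H = hyp \<gamma>' m'"
    using g(2) unfolding H(2) by (rule transfer_preimage)
  then show ?thesis using g(1) unfolding hyperplanes_def by blast
qed

lemma rev_word_inv0:
  assumes "set js \<subseteq> {0,1,2}"
  shows "word s (rev js) \<circ> word s js = id \<and> word s js \<circ> word s (rev js) = id"
  using assms
proof (induction js)
  case Nil
  show ?case by simp
next
  case (Cons j js)
  have j: "j \<in> {0,1,2}" and js: "set js \<subseteq> {0,1,2}" using Cons.prems by auto
  have A: "word s (rev js) \<circ> word s js = id" "word s js \<circ> word s (rev js) = id"
    using Cons.IH js by blast+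
  have sj: "s j \<circ> s j = id" using s_invol_comp[OF j] .
  have 1: "word s (rev (j # js)) \<circ> word s (j # js) = word s (rev js) \<circ> (s j \<circ> s j) \<circ> word s js"
    by (simp add: word_append comp_assoc)
  have 2: "word s (j # js) \<circ> word s (rev (j # js)) = s j \<circ> (word s js \<circ> word s (rev js)) \<circ> s j"
    by (simp add: word_append comp_assoc)
  show ?case by (simp only: 1 2 sj comp_id id_comp A)
qed

lemma rev_word_inv:
  assumes "set js \<subseteq> {0,1,2}"
  shows "word s (rev js) \<circ> word s js = id" "word s js \<circ> word s (rev js) = id"
  using rev_word_inv0[OF assms] by blast+

lemma G_inv:
  assumes "u \<in> G"
  shows "\<exists>v\<in>G. v \<circ> u = id \<and> u \<circ> v = id"
proof -
  obtain js where js: "u = word s js" "set js \<subseteq> {0,1,2}" using assms unfolding G_def by blast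
  have "word s (rev js) \<in> G" unfolding G_def using js(2) by (intro CollectI exI[of _ "rev js"]) auto
  then show ?thesis using rev_word_inv[OF js(2)] js(1) by blast
qed

lemma G_bij:
  assumes "u \<in> G"
  shows "bij u"
  using G_inv[OF assms] o_bij by blast

lemma G_comp:
  assumes "u \<in> G" "v \<in> G" shows "u \<circ> v \<in> G"
proof -
  obtain xs ys where "u = word s xs" "set xs \<subseteq> {0,1,2}" "v = word s ys" "set ys \<subseteq> {0,1,2}"
    using assms unfolding G_def by blast
  then show ?thesis unfolding G_def by (intro CollectI exI[of _ "xs @ ys"]) (auto simp: word_append)
qed

lemma G_s: "j \<in> {0,1,2} \<Longrightarrow> s j \<in> G"
  unfolding G_def by (rule CollectI, rule exI[of _ "[j]"]) (auto simp: word_def)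

lemma G_id: "id \<in> G"
  unfolding G_def by (rule CollectI, rule exI[of _ "[]"]) auto

lemma G_image:
  assumes "u \<in> G" "H \<in> hyperplanes R"
  shows "u ` H \<in> hyperplanes R"
proof -
  obtain v where v: "v \<in> G" "v \<circ> u = id" "u \<circ> v = id" using G_inv[OF assms(1)] by blast
  have "u ` H = v -` H"
  proof (intro set_eqI iffI)
    fix x assume "x \<in> u ` H" then show "x \<in> v -` H" using v by (auto simp: fun_eq_iff)
  next
    fix x assume "x \<in> v -` H" then have "u (v x) \<in> u ` H" by blast
    then show "x \<in> u ` H" using v by (simp add: fun_eq_iff)
  qed
  then show ?thesis using G_preimage[OF v(1) assms(2)] by simp
qed

lemma G_sep_transfer:
  assumes "u \<in> G" "H \<in> hyperplanes R"
  shows "sepH H (u x) (u y) \<longleftrightarrow> sepH (u -` H) x y"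
proof -
  obtain \<gamma> m where H: "\<gamma> \<in> R" "H = hyp \<gamma> m" using assms(2) unfolding hyperplanes_def by blast
  obtain \<gamma>' m' where g: "\<gamma>' \<in> R" "\<forall>x. u x \<bullet> \<gamma> - of_int m = x \<bullet> \<gamma>' - of_int m'"
    using G_transfer[OF assms(1) H(1)] by blast
  have pre: "u -` H = hyp \<gamma>' m'"
    using g(2) unfolding H(2) by (rule transfer_preimage)
  have a: "sepH (u -` H) x y \<longleftrightarrow> (x \<bullet> \<gamma>' - of_int m') * (y \<bullet> \<gamma>' - of_int m') < 0"
    unfolding pre using sepH_hyp R_nz g(1) by simp
  have b: "sepH H (u x) (u y) \<longleftrightarrow> (u x \<bullet> \<gamma> - of_int m) * (u y \<bullet> \<gamma> - of_int m) < 0"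
    unfolding H(2) using sepH_hyp R_nz H(1) by simp
  have c: "u x \<bullet> \<gamma> - of_int m = x \<bullet> \<gamma>' - of_int m'" "u y \<bullet> \<gamma> - of_int m = y \<bullet> \<gamma>' - of_int m'"
    using g(2) by blast+
  show ?thesis unfolding a b c ..
qed

end



lemma sign_xor:
  fixes a b c :: real
  assumes "a \<noteq> 0" "b \<noteq> 0" "c \<noteq> 0"
  shows "a * c < 0 \<longleftrightarrow> ((a * b < 0) \<noteq> (b * c < 0))"
  using assms by (auto simp: mult_less_0_iff)

locale aff0 = aff +
  fixes A0 :: "vec2 set" and p0 :: vec2 and bv :: "nat \<Rightarrow> vec2" and kk :: "nat \<Rightarrow> int"
  assumes alc: "alcove R A0" and p0: "p0 \<in> A0"
    and sdef: "\<forall>j\<in>{0,1,2}. bv j \<in> R \<and> s j = refl (bv j) (kk j)"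
    and walls: "\<forall>j\<in>{0,1,2}. wall R A0 (hyp (bv j) (kk j))"
begin

abbreviation HS where "HS \<equiv> hyperplanes R"

lemma A0_conn: "connected A0"
  using alc in_components_connected unfolding alcove_def by blast

lemma A0_off: "x \<in> A0 \<Longrightarrow> H \<in> HS \<Longrightarrow> x \<notin> H"
  using alc in_components_subset unfolding alcove_def by blast

lemma A0_off_hyp: "x \<in> A0 \<Longrightarrow> \<gamma> \<in> R \<Longrightarrow> x \<bullet> \<gamma> \<noteq> of_int m"
  using A0_off[of x "hyp \<gamma> m"] unfolding hyperplanes_def hyp_def by blast

lemma A0_sign:
  assumes "\<gamma> \<in> R" "x \<in> A0"
  shows "(x \<bullet> \<gamma> - of_int m) * (p0 \<bullet> \<gamma> - of_int m) > 0"
proof (rule ccontr)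
  assume "\<not> ?thesis"
  then have le: "(x \<bullet> \<gamma> - of_int m) * (p0 \<bullet> \<gamma> - of_int m) \<le> 0" by simp
  have nx: "x \<bullet> \<gamma> \<noteq> of_int m" and np: "p0 \<bullet> \<gamma> \<noteq> of_int m"
    using A0_off_hyp assms p0 by blast+
  have "(inner \<gamma> x \<le> of_int m \<and> of_int m \<le> inner \<gamma> p0) \<or> (inner \<gamma> p0 \<le> of_int m \<and> of_int m \<le> inner \<gamma> x)"
    using le by (auto simp: inner_commute mult_le_0_iff)
  then obtain z where "z \<in> A0" "inner \<gamma> z = of_int m"
    using connected_ivt_hyperplane[OF A0_conn assms(2) p0] connected_ivt_hyperplane[OF A0_conn p0 assms(2)]
    by blast
  then show False using A0_off_hyp[of z \<gamma> m] assms(1) by (simp add: inner_commute)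
qed

lemma closure_sign:
  assumes "\<gamma> \<in> R" "y \<in> closure A0"
  shows "(y \<bullet> \<gamma> - of_int m) * (p0 \<bullet> \<gamma> - of_int m) \<ge> 0"
proof (cases "p0 \<bullet> \<gamma> - of_int m > 0")
  case True
  have "A0 \<subseteq> {x. inner \<gamma> x \<ge> of_int m}"
  proof
    fix x assume x: "x \<in> A0"
    have "(x \<bullet> \<gamma> - of_int m) * (p0 \<bullet> \<gamma> - of_int m) > 0" using A0_sign[OF assms(1) x] .
    with True have "x \<bullet> \<gamma> - of_int m > 0" by (simp add: zero_less_mult_iff)
    then show "x \<in> {x. inner \<gamma> x \<ge> of_int m}" by (simp add: inner_commute)
  qed
  then have "closure A0 \<subseteq> {x. inner \<gamma> x \<ge> of_int m}"
    by (rule closure_minimal) (rule closed_halfspace_ge)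
  then show ?thesis using assms(2) True by (auto simp: inner_commute)
next
  case False
  have np: "p0 \<bullet> \<gamma> \<noteq> of_int m" using A0_off_hyp assms p0 by blast
  have "A0 \<subseteq> {x. inner \<gamma> x \<le> of_int m}"
  proof
    fix x assume x: "x \<in> A0"
    have "(x \<bullet> \<gamma> - of_int m) * (p0 \<bullet> \<gamma> - of_int m) > 0" using A0_sign[OF assms(1) x] .
    with False np have "x \<bullet> \<gamma> - of_int m < 0" by (simp add: zero_less_mult_iff)
    then show "x \<in> {x. inner \<gamma> x \<le> of_int m}" by (simp add: inner_commute)
  qed
  then have "closure A0 \<subseteq> {x. inner \<gamma> x \<le> of_int m}"
    by (rule closure_minimal) (rule closed_halfspace_le)
  then show ?thesis using assms(2) False by (auto simp: inner_commute mult_nonpos_nonpos)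
qed

lemma G_closure_sign:
  assumes "u \<in> G" "\<gamma> \<in> R" "y \<in> closure A0"
  shows "(u y \<bullet> \<gamma> - of_int m) * (u p0 \<bullet> \<gamma> - of_int m) \<ge> 0"
proof -
  obtain \<gamma>' m' where g: "\<gamma>' \<in> R" "\<forall>x. u x \<bullet> \<gamma> - of_int m = x \<bullet> \<gamma>' - of_int m'"
    using G_transfer[OF assms(1,2)] by blast
  have "u y \<bullet> \<gamma> - of_int m = y \<bullet> \<gamma>' - of_int m'" "u p0 \<bullet> \<gamma> - of_int m = p0 \<bullet> \<gamma>' - of_int m'"
    using g(2) by blast+
  then show ?thesis using closure_sign[OF g(1) assms(3)] by simp
qed

lemma G_off:
  assumes "u \<in> G" "x \<in> A0" "H \<in> HS"
  shows "u x \<notin> H"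
  using A0_off[OF assms(2) G_preimage[OF assms(1,3)]] by blast

lemma G_off_hyp:
  assumes "u \<in> G" "x \<in> A0" "\<gamma> \<in> R"
  shows "u x \<bullet> \<gamma> \<noteq> of_int m"
  using G_off[OF assms(1,2), of "hyp \<gamma> m"] assms(3) unfolding hyperplanes_def hyp_def by blast

lemma sepH_off:
  assumes "sepH H x y" shows "x \<notin> H" "y \<notin> H"
  using assms unfolding sepH_def hyp_def by auto

lemma sepH_xor:
  assumes "H \<in> HS" "x \<notin> H" "y \<notin> H" "z \<notin> H"
  shows "sepH H x z \<longleftrightarrow> (sepH H x y \<noteq> sepH H y z)"
proof -
  obtain \<gamma> m where H: "\<gamma> \<in> R" "H = hyp \<gamma> m" using assms(1) unfolding hyperplanes_def by blast
  have nz: "\<gamma> \<noteq> 0" using R_nz H(1) by simp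
  have "x \<bullet> \<gamma> - of_int m \<noteq> 0" "y \<bullet> \<gamma> - of_int m \<noteq> 0" "z \<bullet> \<gamma> - of_int m \<noteq> 0"
    using assms(2-4) H(2) unfolding hyp_def by auto
  then show ?thesis unfolding H(2) sepH_hyp[OF nz] by (rule sign_xor)
qed

definition Hj :: "nat \<Rightarrow> vec2 set" where "Hj j = hyp (bv j) (kk j)"

lemma Hj_HS: "j \<in> {0,1,2} \<Longrightarrow> Hj j \<in> HS"
  using sdef unfolding Hj_def hyperplanes_def by blast

lemma b_R: "j \<in> {0,1,2} \<Longrightarrow> bv j \<in> R" using sdef by blast
lemma s_def': "j \<in> {0,1,2} \<Longrightarrow> s j = refl (bv j) (kk j)" using sdef by blast

lemma key_sep:
  assumes j: "j \<in> {0,1,2}" and H: "H \<in> HS"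
  shows "sepH H p0 (s j p0) \<longleftrightarrow> H = Hj j"
proof
  assume sp: "sepH H p0 (s j p0)"
  obtain \<gamma> m where Hg: "\<gamma> \<in> R" "H = hyp \<gamma> m" using H unfolding hyperplanes_def by blast
  have nz: "\<gamma> \<noteq> 0" using R_nz Hg(1) by simp
  have neg: "(p0 \<bullet> \<gamma> - of_int m) * (s j p0 \<bullet> \<gamma> - of_int m) < 0"
    using sp unfolding Hg(2) sepH_hyp[OF nz] .
  obtain p q where pq: "p \<noteq> q" "p \<in> Hj j" "p \<in> closure A0" "q \<in> Hj j" "q \<in> closure A0"
    using walls j unfolding wall_def Hj_def by blast
  have zero: "r \<bullet> \<gamma> - of_int m = 0" if r: "r \<in> Hj j" "r \<in> closure A0" for r
  proof -
    have fix': "s j r = r" using refl_fix r(1) s_def'[OF j] unfolding Hj_def by simp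
    have a: "(r \<bullet> \<gamma> - of_int m) * (p0 \<bullet> \<gamma> - of_int m) \<ge> 0"
      using closure_sign[OF Hg(1) r(2)] .
    have "(s j r \<bullet> \<gamma> - of_int m) * (s j p0 \<bullet> \<gamma> - of_int m) \<ge> 0"
      using G_closure_sign[OF G_s[OF j] Hg(1) r(2)] .
    then have b: "(r \<bullet> \<gamma> - of_int m) * (s j p0 \<bullet> \<gamma> - of_int m) \<ge> 0" using fix' by simp
    show ?thesis using a b neg
      by (smt (verit, best) mult_le_0_iff mult_less_0_iff zero_le_mult_iff)
  qed
  have "p \<in> H" "q \<in> H" using zero[OF pq(2,3)] zero[OF pq(4,5)] Hg(2) unfolding hyp_def by auto
  moreover have "bv j \<noteq> 0" using R_nz b_R[OF j] by simp
  ultimately show "H = Hj j" using hyp_two_points[OF nz _ pq(1)] pq(2,4) Hg(2) unfolding Hj_def by metis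
next
  assume "H = Hj j"
  have nz: "bv j \<noteq> 0" using R_nz b_R[OF j] by simp
  have "p0 \<bullet> bv j \<noteq> of_int (kk j)" using A0_off_hyp[OF p0 b_R[OF j]] by blast
  then have "(p0 \<bullet> bv j - of_int (kk j)) * (s j p0 \<bullet> bv j - of_int (kk j)) < 0"
    unfolding s_def'[OF j] refl_inner_self[OF nz] by (simp add: mult_less_0_iff) (smt (verit))
  then show "sepH H p0 (s j p0)" unfolding \<open>H = Hj j\<close> Hj_def sepH_hyp[OF nz] .
qed

definition Sep :: "(vec2 \<Rightarrow> vec2) \<Rightarrow> vec2 set set" where
  "Sep u = {H \<in> HS. sepH H p0 (u p0)}"

lemma finite_int_abs: "finite {k::int. \<bar>of_int k\<bar> \<le> (c::real)}"
proof -
  have "{k::int. \<bar>of_int k\<bar> \<le> c} \<subseteq> {- \<lceil>c\<rceil>..\<lceil>c\<rceil>}"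
  proof
    fix k assume "k \<in> {k::int. \<bar>of_int k\<bar> \<le> c}"
    then have k: "\<bar>(of_int k::real)\<bar> \<le> c" by simp
    have "(of_int k::real) \<le> of_int \<lceil>c\<rceil>" "(of_int (-k)::real) \<le> of_int \<lceil>c\<rceil>"
      using le_of_int_ceiling[of c] k by linarith+
    then have "k \<le> \<lceil>c\<rceil>" "- k \<le> \<lceil>c\<rceil>" by (simp_all only: of_int_le_iff)
    then show "k \<in> {- \<lceil>c\<rceil>..\<lceil>c\<rceil>}" by simp
  qed
  then show ?thesis using finite_subset by blast
qed

lemma Sep_finite: "finite (Sep u)"
proof -
  define B where "B \<gamma> = \<bar>p0 \<bullet> \<gamma>\<bar> + \<bar>u p0 \<bullet> \<gamma>\<bar>" for \<gamma>
  have "Sep u \<subseteq> (\<lambda>(\<gamma>,k). hyp \<gamma> k) ` (SIGMA \<gamma>:R. {k::int. \<bar>of_int k\<bar> \<le> B \<gamma>})"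
  proof
    fix H assume H: "H \<in> Sep u"
    then obtain \<gamma> m where Hg: "\<gamma> \<in> R" "H = hyp \<gamma> m" unfolding Sep_def hyperplanes_def by blast
    have nz: "\<gamma> \<noteq> 0" using R_nz Hg(1) by simp
    have "(p0 \<bullet> \<gamma> - of_int m) * (u p0 \<bullet> \<gamma> - of_int m) < 0"
      using H unfolding Sep_def Hg(2) by (simp add: sepH_hyp[OF nz])
    then have "\<bar>of_int m\<bar> \<le> B \<gamma>" unfolding B_def
      by (auto simp: mult_less_0_iff)
    then show "H \<in> (\<lambda>(\<gamma>,k). hyp \<gamma> k) ` (SIGMA \<gamma>:R. {k::int. \<bar>of_int k\<bar> \<le> B \<gamma>})"
      using Hg by force
  qed
  moreover have "finite (SIGMA \<gamma>:R. {k::int. \<bar>of_int k\<bar> \<le> B \<gamma>})"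
    using R_finite finite_int_abs by blast
  ultimately show ?thesis using finite_subset by blast
qed

lemma Sep_step:
  assumes u: "u \<in> G" and j: "j \<in> {0,1,2}" and H: "H \<in> HS"
  shows "H \<in> Sep (u \<circ> s j) \<longleftrightarrow> ((H \<in> Sep u) \<noteq> (H = u ` Hj j))"
proof -
  have usj: "u \<circ> s j \<in> G" using G_comp[OF u G_s[OF j]] .
  have o1: "p0 \<notin> H" using A0_off[OF p0 H] .
  have o2: "u p0 \<notin> H" using G_off[OF u p0 H] .
  have o3: "u (s j p0) \<notin> H" using G_off[OF usj p0 H] by simp
  have "sepH H p0 (u (s j p0)) \<longleftrightarrow> (sepH H p0 (u p0) \<noteq> sepH H (u p0) (u (s j p0)))"
    using sepH_xor[OF H o1 o2 o3] .
  moreover have "sepH H (u p0) (u (s j p0)) \<longleftrightarrow> u -` H = Hj j"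
    using G_sep_transfer[OF u H] key_sep[OF j G_preimage[OF u H]] by simp
  moreover have "u -` H = Hj j \<longleftrightarrow> H = u ` Hj j"
    using G_bij[OF u] by (metis bij_is_inj bij_is_surj inj_vimage_image_eq surj_image_vimage_eq)
  ultimately show ?thesis unfolding Sep_def using H by auto
qed

lemma Sep_step_card:
  assumes u: "u \<in> G" and j: "j \<in> {0,1,2}"
  shows "Sep (u \<circ> s j) = (if u ` Hj j \<in> Sep u then Sep u - {u ` Hj j} else insert (u ` Hj j) (Sep u))"
proof -
  have C: "u ` Hj j \<in> HS" using G_image[OF u Hj_HS[OF j]] .
  have sub: "Sep v \<subseteq> HS" for v unfolding Sep_def by blast
  show ?thesis
  proof (rule set_eqI)
    fix H
    show "H \<in> Sep (u \<circ> s j) \<longleftrightarrow> H \<in> (if u ` Hj j \<in> Sep u then Sep u - {u ` Hj j} else insert (u ` Hj j) (Sep u))"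
    proof (cases "H \<in> HS")
      case True
      then show ?thesis using Sep_step[OF u j True] by auto
    next
      case False
      then show ?thesis using sub C by auto
    qed
  qed
qed

end



context aff0 begin

lemma refl_image_eq_preimage:
  assumes "\<delta> \<noteq> 0"
  shows "refl \<delta> e ` S = refl \<delta> e -` S"
proof (intro set_eqI iffI)
  fix x assume "x \<in> refl \<delta> e ` S"
  then obtain y where "y \<in> S" "x = refl \<delta> e y" by blast
  then show "x \<in> refl \<delta> e -` S" using refl_invol[OF assms] by simp
next
  fix x assume "x \<in> refl \<delta> e -` S"
  then have "refl \<delta> e (refl \<delta> e x) \<in> refl \<delta> e ` S" by blast
  then show "x \<in> refl \<delta> e ` S" using refl_invol[OF assms] by simp
qed

lemma refl_conj1:
  assumes "\<delta> \<in> R" "\<gamma> \<in> R"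
  shows "\<exists>\<gamma>'\<in>R. \<exists>m'::int. refl \<delta> e \<circ> refl \<gamma> m = refl \<gamma>' m' \<circ> refl \<delta> e \<and> refl \<delta> e ` hyp \<gamma> m = hyp \<gamma>' m'"
proof -
  obtain z where z: "2 * (\<gamma> \<bullet> \<delta>) / (\<delta> \<bullet> \<delta>) = of_int z" using R_int[OF assms] by (metis Ints_cases)
  define \<gamma>' where "\<gamma>' = \<gamma> - (2 * (\<gamma> \<bullet> \<delta>) / (\<delta> \<bullet> \<delta>)) *\<^sub>R \<delta>"
  define m' where "m' = m - e * z"
  have g': "\<gamma>' \<in> R" unfolding \<gamma>'_def using R_refl[OF assms] .
  have c: "refl \<delta> e (refl \<gamma> m v) = refl \<gamma>' m' (refl \<delta> e v)" for v
    unfolding \<gamma>'_def using refl_conj[OF R_nz[OF assms(1)] R_nz[OF assms(2)] refl, of m' m e v] z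
    by (simp add: m'_def)
  have t: "\<forall>x. refl \<delta> e x \<bullet> \<gamma> - of_int m = x \<bullet> \<gamma>' - of_int m'"
    using refl_inner[of \<delta> e _ \<gamma> m] z unfolding \<gamma>'_def m'_def by simp
  have i: "refl \<delta> e ` hyp \<gamma> m = hyp \<gamma>' m'"
    unfolding refl_image_eq_preimage[OF R_nz[OF assms(1)]] using t by (rule transfer_preimage)
  show ?thesis using g' c i by (intro bexI[of _ \<gamma>'] exI[of _ m']) (auto simp: fun_eq_iff)
qed

lemma word_conj:
  assumes "set js \<subseteq> {0,1,2}" "\<beta> \<in> R"
  shows "\<exists>\<gamma>\<in>R. \<exists>m::int. word s js \<circ> refl \<beta> k = refl \<gamma> m \<circ> word s js \<and> word s js ` hyp \<beta> k = hyp \<gamma> m"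
  using assms(1)
proof (induction js)
  case Nil
  show ?case using assms(2) by (intro bexI[of _ \<beta>] exI[of _ k]) auto
next
  case (Cons j js)
  have j: "j \<in> {0,1,2}" and js: "set js \<subseteq> {0,1,2}" using Cons.prems by auto
  obtain \<gamma> m where gm: "\<gamma> \<in> R" "word s js \<circ> refl \<beta> k = refl \<gamma> m \<circ> word s js" "word s js ` hyp \<beta> k = hyp \<gamma> m"
    using Cons.IH[OF js] by blast
  obtain \<gamma>' m' where g': "\<gamma>' \<in> R" "refl (bv j) (kk j) \<circ> refl \<gamma> m = refl \<gamma>' m' \<circ> refl (bv j) (kk j)"
    "refl (bv j) (kk j) ` hyp \<gamma> m = hyp \<gamma>' m'"
    using refl_conj1[OF b_R[OF j] gm(1)] by blast
  have "word s (j # js) \<circ> refl \<beta> k = refl \<gamma>' m' \<circ> word s (j # js)"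
    using gm(2) g'(2) s_def'[OF j] by (simp add: comp_assoc) (metis comp_assoc)
  moreover have "word s (j # js) ` hyp \<beta> k = hyp \<gamma>' m'"
  proof -
    have "word s (j # js) ` hyp \<beta> k = s j ` (word s js ` hyp \<beta> k)" by (simp add: image_comp)
    then show ?thesis using gm(3) g'(3) s_def'[OF j] by simp
  qed
  ultimately show ?case using g'(1) by blast
qed

lemma take_split3:
  assumes "a < c" "c \<le> length js"
  shows "take c js = take a js @ [js ! a] @ take (c - a - 1) (drop (a + 1) js)"
proof -
  have "take c js = take a js @ take (c - a) (drop a js)"
    using assms by (metis add_diff_inverse_nat less_imp_le_nat not_le take_add)
  moreover have "drop a js = js ! a # drop (a + 1) js" using assms by (simp add: Cons_nth_drop_Suc)
  moreover have "take (c - a) (js ! a # drop (a + 1) js) = js ! a # take (c - a - 1) (drop (a + 1) js)"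
    using assms by (cases "c - a") auto
  ultimately show ?thesis by simp
qed

lemma js_split:
  assumes "c < length js"
  shows "js = take c js @ [js ! c] @ drop (c + 1) js"
  using assms by (simp add: Cons_nth_drop_Suc)

definition Cg :: "nat list \<Rightarrow> nat \<Rightarrow> vec2 set" where
  "Cg js a = word s (take a js) ` Hj (js ! a)"

lemma deletion:
  assumes js: "set js \<subseteq> {0,1,2}" and ab: "a < c" "c < length js" and eq: "Cg js a = Cg js c"
  shows "word s js = word s (take a js @ take (c - a - 1) (drop (a + 1) js) @ drop (c + 1) js)"
proof -
  have "a < length js" using ab by simp
  then have "js ! a \<in> set js" by (rule nth_mem)
  then have ja: "js ! a \<in> {0,1,2}" using js by blast
  have "js ! c \<in> set js" using ab(2) by (rule nth_mem)
  then have jb: "js ! c \<in> {0,1,2}" using js by blast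
  have ta: "set (take a js) \<subseteq> {0,1,2}" and tb: "set (take c js) \<subseteq> {0,1,2}"
    using js by (meson order_trans set_take_subset)+
  obtain \<gamma>a ma where A: "\<gamma>a \<in> R" "word s (take a js) \<circ> refl (bv (js!a)) (kk (js!a)) = refl \<gamma>a ma \<circ> word s (take a js)"
      "word s (take a js) ` hyp (bv (js!a)) (kk (js!a)) = hyp \<gamma>a ma"
    using word_conj[OF ta b_R[OF ja]] by blast
  obtain \<gamma>b mb where B: "\<gamma>b \<in> R" "word s (take c js) \<circ> refl (bv (js!c)) (kk (js!c)) = refl \<gamma>b mb \<circ> word s (take c js)"
      "word s (take c js) ` hyp (bv (js!c)) (kk (js!c)) = hyp \<gamma>b mb"
    using word_conj[OF tb b_R[OF jb]] by blast
  have "hyp \<gamma>a ma = hyp \<gamma>b mb" using eq A(3) B(3) unfolding Cg_def Hj_def by simp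
  then have r: "refl \<gamma>b mb = refl \<gamma>a ma" using hyp_eq_refl R_nz A(1) B(1) by metis
  define ta where "ta = word s (take a js)"
  define mid where "mid = word s (take (c - a - 1) (drop (a + 1) js))"
  define rest where "rest = word s (drop (c + 1) js)"
  have sa: "s (js!a) = refl (bv (js!a)) (kk (js!a))" using s_def'[OF ja] .
  have sb: "s (js!c) = refl (bv (js!c)) (kk (js!c))" using s_def'[OF jb] .
  have tbdef: "word s (take c js) = ta \<circ> s (js!a) \<circ> mid"
    unfolding ta_def mid_def using take_split3[OF ab(1) less_imp_le[OF ab(2)]]
    by (metis append_Cons append_Nil word_Cons word_append comp_assoc)
  have whole: "word s js = word s (take c js) \<circ> s (js!c) \<circ> rest"
    unfolding rest_def by (subst js_split[OF ab(2)]) (simp add: word_append comp_assoc)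
  have "word s (take c js) \<circ> s (js!c) = refl \<gamma>a ma \<circ> word s (take c js)"
    using B(2) r sb by simp
  also have "\<dots> = (refl \<gamma>a ma \<circ> ta) \<circ> s (js!a) \<circ> mid" unfolding tbdef by (simp add: comp_assoc)
  also have "\<dots> = (ta \<circ> s (js!a)) \<circ> s (js!a) \<circ> mid" using A(2) sa unfolding ta_def by simp
  also have "\<dots> = ta \<circ> mid" using s_invol_comp[OF ja] by (simp add: comp_assoc)
  finally have "word s js = ta \<circ> mid \<circ> rest" using whole by simp
  then show ?thesis unfolding ta_def mid_def rest_def by (simp add: word_append comp_assoc)
qed

lemma word_G: "set js \<subseteq> {0,1,2} \<Longrightarrow> word s js \<in> G"
  unfolding G_def by blast

lemma Sep_id: "Sep id = {}"
  unfolding Sep_def sepH_def by (auto simp: mult_less_0_iff)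

lemma Sep_distinct:
  assumes js: "set js \<subseteq> {0,1,2}" and d: "distinct (map (Cg js) [0..<length js])"
  shows "a \<le> length js \<Longrightarrow> Sep (word s (take a js)) = set (map (Cg js) [0..<a])"
proof (induction a)
  case 0 then show ?case using Sep_id by (simp add: id_def)
next
  case (Suc a)
  have a: "a < length js" using Suc.prems by simp
  have "js ! a \<in> set js" using a by (rule nth_mem)
  then have ja: "js ! a \<in> {0,1,2}" using js by blast
  have ta: "set (take a js) \<subseteq> {0,1,2}" using js by (meson order_trans set_take_subset)
  have w: "word s (take (Suc a) js) = word s (take a js) \<circ> s (js ! a)"
    using a by (simp add: take_Suc_conv_app_nth word_append)
  have notin: "Cg js a \<notin> set (map (Cg js) [0..<a])"
    using d a by (auto simp: distinct_conv_nth)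
  have "Sep (word s (take (Suc a) js)) = insert (Cg js a) (Sep (word s (take a js)))"
    unfolding w Sep_step_card[OF word_G[OF ta] ja] using Suc.IH Suc.prems notin
    by (simp add: Cg_def)
  then show ?case using Suc.IH Suc.prems by simp
qed

lemma gallery:
  assumes js: "set js \<subseteq> {0,1,2}"
  shows "card (Sep (word s js)) = length js \<or>
         (\<exists>js'. set js' \<subseteq> {0,1,2} \<and> length js' < length js \<and> word s js' = word s js)"
proof (cases "distinct (map (Cg js) [0..<length js])")
  case True
  have eqS: "Sep (word s js) = set (map (Cg js) [0..<length js])"
    using Sep_distinct[OF js True, of "length js"] by simp
  have c: "card (set (map (Cg js) [0..<length js])) = length (map (Cg js) [0..<length js])"
    by (rule distinct_card[OF True])
  then have "card (Sep (word s js)) = length js" unfolding eqS by simp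
  then show ?thesis by simp
next
  case False
  then obtain i j where ij: "i < length js" "j < length js" "i \<noteq> j" "Cg js i = Cg js j"
    by (auto simp: distinct_conv_nth)
  obtain a c where ab: "a < c" "c < length js" "Cg js a = Cg js c"
    using ij by (metis linorder_neqE_nat)
  define js' where "js' = take a js @ take (c - a - 1) (drop (a + 1) js) @ drop (c + 1) js"
  have "word s js = word s js'" unfolding js'_def using deletion[OF js ab] .
  moreover have "length js' < length js" unfolding js'_def using ab by simp
  moreover have "set js' \<subseteq> {0,1,2}" unfolding js'_def using js
    by (auto dest: in_set_takeD in_set_dropD)
  ultimately show ?thesis by metis
qed

lemma len_card:
  assumes u: "u \<in> G"
  shows "len s u = card (Sep u)"
proof -
  let ?P = "\<lambda>n. \<exists>js. length js = n \<and> set js \<subseteq> {0,1,2} \<and> u = word s js"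
  have ex: "\<exists>n. ?P n" using u unfolding G_def by blast
  have P: "?P (len s u)" unfolding len_def by (rule LeastI_ex[OF ex])
  then obtain js where js: "length js = len s u" "set js \<subseteq> {0,1,2}" "u = word s js" by blast
  show ?thesis
  proof (cases "card (Sep (word s js)) = length js")
    case True then show ?thesis using js by simp
  next
    case False
    then obtain js' where js': "set js' \<subseteq> {0,1,2}" "length js' < length js" "word s js' = word s js"
      using gallery[OF js(2)] by blast
    have "?P (length js')" using js' js by metis
    then have "len s u \<le> length js'" unfolding len_def by (rule Least_le)
    then show ?thesis using js' js by simp
  qed
qed

lemma len_step:
  assumes u: "u \<in> G" and j: "j \<in> {0,1,2}"
  shows "len s (u \<circ> s j) < len s u \<longleftrightarrow> u ` Hj j \<in> Sep u"
proof -
  have usj: "u \<circ> s j \<in> G" using G_comp[OF u G_s[OF j]] .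
  have fin: "finite (Sep u)" by (rule Sep_finite)
  show ?thesis
  proof (cases "u ` Hj j \<in> Sep u")
    case True
    then have "card (Sep (u \<circ> s j)) = card (Sep u) - 1"
      using Sep_step_card[OF u j] fin by simp
    moreover have "card (Sep u) > 0" using True fin card_gt_0_iff by blast
    ultimately show ?thesis using len_card[OF u] len_card[OF usj] True by simp
  next
    case False
    then have "card (Sep (u \<circ> s j)) = card (Sep u) + 1"
      using Sep_step_card[OF u j] fin by simp
    then show ?thesis using len_card[OF u] len_card[OF usj] False by simp
  qed
qed

lemma notG_len:
  assumes u: "u \<notin> G" and j: "j \<in> {0,1,2}"
  shows "len s (u \<circ> s j) = len s u"
proof -
  have u2: "u \<circ> s j \<notin> G"
  proof
    assume "u \<circ> s j \<in> G"
    then have "(u \<circ> s j) \<circ> s j \<in> G" using G_comp G_s[OF j] by blast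
    then show False using u s_invol_comp[OF j] by (simp add: comp_assoc)
  qed
  have a: "\<not> (\<exists>js. length js = n \<and> set js \<subseteq> {0,1,2} \<and> u = word s js)" for n
    using u unfolding G_def by blast
  have b2: "\<not> (\<exists>js. length js = n \<and> set js \<subseteq> {0,1,2} \<and> u \<circ> s j = word s js)" for n
    using u2 unfolding G_def by blast
  have e1: "(\<lambda>n. \<exists>js. length js = n \<and> set js \<subseteq> {0,1,2} \<and> u = word s js) = (\<lambda>n. False)"
    by (intro ext) (use a in auto)
  have e2: "(\<lambda>n. \<exists>js. length js = n \<and> set js \<subseteq> {0,1,2} \<and> u \<circ> s j = word s js) = (\<lambda>n. False)"
    by (intro ext) (use b2 in auto)
  show ?thesis unfolding len_def e1 e2 ..
qed

end



lemma det2_lin1: "det2 (a *\<^sub>R e + b *\<^sub>R f) f = a * det2 e f"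
  by (simp add: det2_def algebra_simps)
lemma det2_lin2: "det2 e (a *\<^sub>R e + b *\<^sub>R f) = b * det2 e f"
  by (simp add: det2_def algebra_simps)

lemma coef_unique:
  assumes "det2 e f \<noteq> 0" "a *\<^sub>R e + b *\<^sub>R f = a' *\<^sub>R e + b' *\<^sub>R f"
  shows "a = a'" "b = b'"
proof -
  have "a * det2 e f = a' * det2 e f" using det2_lin1[of a e b f] det2_lin1[of a' e b' f] assms(2) by metis
  then show "a = a'" using assms(1) by simp
  have "b * det2 e f = b' * det2 e f" using det2_lin2[of e a b f] det2_lin2[of e a' b' f] assms(2) by metis
  then show "b = b'" using assms(1) by simp
qed

definition Lc :: "int \<Rightarrow> int \<Rightarrow> (real \<times> real) list" where
  "Lc x y = (if x = -1 \<and> y = -1 then [(1,0),(0,1),(1,1)]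
    else if x = -1 \<and> y = -2 then [(1,0),(0,1),(1,1),(1,2)]
    else if x = -2 \<and> y = -1 then [(1,0),(0,1),(1,1),(2,1)]
    else if x = -1 \<and> y = -3 then [(1,0),(0,1),(1,1),(1,2),(1,3),(2,3)]
    else [(1,0),(0,1),(1,1),(2,1),(3,1),(3,2)])"

definition cases5 :: "int \<Rightarrow> int \<Rightarrow> bool" where
  "cases5 x y \<longleftrightarrow> (x = -1 \<and> y = -1) \<or> (x = -1 \<and> y = -2) \<or> (x = -2 \<and> y = -1) \<or>
     (x = -1 \<and> y = -3) \<or> (x = -3 \<and> y = -1)"

lemma Lc_closed_e:
  assumes "cases5 x y" "(a,b) \<in> set (Lc x y)" "b > 0"
  shows "(- a - b * of_int x, b) \<in> set (Lc x y)"
  using assms unfolding cases5_def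
  by (elim disjE conjE; simp add: Lc_def; elim disjE; simp)

lemma Lc_closed_f:
  assumes "cases5 x y" "(a,b) \<in> set (Lc x y)" "a > 0"
  shows "(a, - b - a * of_int y) \<in> set (Lc x y)"
  using assms unfolding cases5_def
  by (elim disjE conjE; simp add: Lc_def; elim disjE; simp)

lemma int_cases5:
  fixes x y :: int
  assumes "x < 0" "y < 0" "x * y < 4"
  shows "cases5 x y"
proof -
  have "(-x) * (-y) \<ge> (-x) * 1" using assms by (intro mult_left_mono) auto
  then have xl: "x \<ge> -3" using assms by simp
  have "(-x) * (-y) \<ge> 1 * (-y)" using assms by (intro mult_right_mono) auto
  then have yl: "y \<ge> -3" using assms by simp
  have "x \<in> {-3,-2,-1}" "y \<in> {-3,-2,-1}" using xl yl assms by auto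
  then show ?thesis using assms(3) unfolding cases5_def by auto
qed

locale chamber = aff0 +
  fixes e f p1 p2 :: vec2
  assumes eR: "e \<in> R" and fR: "f \<in> R" and ep: "p0 \<bullet> e > 0" and fp: "p0 \<bullet> f > 0"
    and det: "det2 e f \<noteq> 0"
    and p1: "p1 \<in> closure A0" "p1 \<bullet> e = 0" "p1 \<noteq> 0"
    and p2: "p2 \<in> closure A0" "p2 \<bullet> f = 0" "p2 \<noteq> 0"
begin

lemma p1f: "p1 \<bullet> f > 0"
proof -
  have "(p1 \<bullet> f - of_int 0) * (p0 \<bullet> f - of_int 0) \<ge> 0" using closure_sign[OF fR p1(1)] .
  then have ge: "p1 \<bullet> f \<ge> 0" using fp by (simp add: zero_le_mult_iff)
  have "p1 \<bullet> f \<noteq> 0"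
  proof
    assume "p1 \<bullet> f = 0"
    then have "p1 = 0" using det2_determined[OF det, of p1 0] p1(2) by simp
    then show False using p1(3) by simp
  qed
  then show ?thesis using ge by simp
qed

lemma p2e: "p2 \<bullet> e > 0"
proof -
  have "(p2 \<bullet> e - of_int 0) * (p0 \<bullet> e - of_int 0) \<ge> 0" using closure_sign[OF eR p2(1)] .
  then have ge: "p2 \<bullet> e \<ge> 0" using ep by (simp add: zero_le_mult_iff)
  have "p2 \<bullet> e \<noteq> 0"
  proof
    assume "p2 \<bullet> e = 0"
    then have "p2 = 0" using det2_determined[OF det, of p2 0] p2(2) by simp
    then show False using p2(3) by simp
  qed
  then show ?thesis using ge by simp
qed

lemma root_p0: "\<delta> \<in> R \<Longrightarrow> p0 \<bullet> \<delta> \<noteq> 0"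
  using A0_off_hyp[OF p0, of \<delta> 0] by simp

lemma coef_ex: "\<exists>a b. v = a *\<^sub>R e + b *\<^sub>R f"
  using det2_coeffs[OF det] by blast

lemma root_pos_coef:
  assumes "\<delta> \<in> R" "\<delta> = a *\<^sub>R e + b *\<^sub>R f" "p0 \<bullet> \<delta> > 0"
  shows "a \<ge> 0" "b \<ge> 0"
proof -
  have "(p1 \<bullet> \<delta> - of_int 0) * (p0 \<bullet> \<delta> - of_int 0) \<ge> 0" using closure_sign[OF assms(1) p1(1)] .
  then have "p1 \<bullet> \<delta> \<ge> 0" using assms(3) by (simp add: zero_le_mult_iff)
  moreover have "p1 \<bullet> \<delta> = b * (p1 \<bullet> f)" using assms(2) p1(2) by (simp add: inner_add_right)
  ultimately show "b \<ge> 0" using p1f by (simp add: zero_le_mult_iff)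
  have "(p2 \<bullet> \<delta> - of_int 0) * (p0 \<bullet> \<delta> - of_int 0) \<ge> 0" using closure_sign[OF assms(1) p2(1)] .
  then have "p2 \<bullet> \<delta> \<ge> 0" using assms(3) by (simp add: zero_le_mult_iff)
  moreover have "p2 \<bullet> \<delta> = a * (p2 \<bullet> e)" using assms(2) p2(2) by (simp add: inner_add_right)
  ultimately show "a \<ge> 0" using p2e by (simp add: zero_le_mult_iff)
qed

lemma root_coef_sign:
  assumes "\<delta> \<in> R" "\<delta> = a *\<^sub>R e + b *\<^sub>R f"
  shows "(a \<ge> 0 \<and> b \<ge> 0) \<or> (a \<le> 0 \<and> b \<le> 0)"
proof (cases "p0 \<bullet> \<delta> > 0")
  case True then show ?thesis using root_pos_coef[OF assms] by simp
next
  case False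
  then have "p0 \<bullet> (- \<delta>) > 0" using root_p0[OF assms(1)] by (simp add: inner_minus_right)
  moreover have "- \<delta> = (- a) *\<^sub>R e + (- b) *\<^sub>R f" using assms(2) by simp
  ultimately have "- a \<ge> 0" "- b \<ge> 0" using root_pos_coef[OF R_neg[OF assms(1)]] by blast+
  then show ?thesis by simp
qed

lemma ee_pos: "e \<bullet> e > 0" using R_nz[OF eR] by simp
lemma ff_pos: "f \<bullet> f > 0" using R_nz[OF fR] by simp

definition ce where "ce = 2 * (f \<bullet> e) / (e \<bullet> e)"
definition cf where "cf = 2 * (e \<bullet> f) / (f \<bullet> f)"

lemma se_coef:
  assumes "a *\<^sub>R e + b *\<^sub>R f \<in> R"
  shows "(- a - b * ce) *\<^sub>R e + b *\<^sub>R f \<in> R"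
proof -
  let ?d = "a *\<^sub>R e + b *\<^sub>R f"
  have k: "2 * (?d \<bullet> e) / (e \<bullet> e) = 2 * a + b * ce"
    using ee_pos unfolding ce_def by (simp add: inner_add_left field_simps)
  have g: "?d - k *\<^sub>R e = (a - k) *\<^sub>R e + b *\<^sub>R f" for k
    by (simp add: scaleR_diff_left)
  have sc: "a - (2 * a + b * ce) = - a - b * ce" by simp
  have h1: "?d - (2 * a + b * ce) *\<^sub>R e \<in> R" using R_refl[OF eR assms] by (simp only: k)
  then show ?thesis by (simp only: g sc)
qed

lemma sf_coef:
  assumes "a *\<^sub>R e + b *\<^sub>R f \<in> R"
  shows "a *\<^sub>R e + (- b - a * cf) *\<^sub>R f \<in> R"
proof -
  let ?d = "a *\<^sub>R e + b *\<^sub>R f"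
  have k: "2 * (?d \<bullet> f) / (f \<bullet> f) = a * cf + 2 * b"
    using ff_pos unfolding cf_def by (simp add: inner_add_left inner_add_right field_simps inner_commute)
  have g: "?d - k *\<^sub>R f = a *\<^sub>R e + (b - k) *\<^sub>R f" for k
    by (simp add: scaleR_diff_left)
  have sc: "b - (a * cf + 2 * b) = - b - a * cf" by simp
  have h1: "?d - (a * cf + 2 * b) *\<^sub>R f \<in> R" using R_refl[OF fR assms] by (simp only: k)
  then show ?thesis by (simp only: g sc)
qed

lemma e_coef: "e = 1 *\<^sub>R e + 0 *\<^sub>R f" by simp
lemma f_coef: "f = 0 *\<^sub>R e + 1 *\<^sub>R f" by simp

lemma ef_nonzero: "e \<bullet> f \<noteq> 0"
proof
  assume ef: "e \<bullet> f = 0"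
  have ce0: "ce = 0" unfolding ce_def using ef by (simp add: inner_commute)
  have cf0: "cf = 0" unfolding cf_def using ef by simp
  have sub: "\<delta> \<in> {e, -e, f, -f}" if d: "\<delta> \<in> R" for \<delta>
  proof -
    obtain a b where ab: "\<delta> = a *\<^sub>R e + b *\<^sub>R f" using coef_ex by blast
    have s1: "(a \<ge> 0 \<and> b \<ge> 0) \<or> (a \<le> 0 \<and> b \<le> 0)" using root_coef_sign[OF d ab] .
    have "(- a) *\<^sub>R e + b *\<^sub>R f \<in> R" using se_coef[of a b] d ab ce0 by simp
    then have s2: "(- a \<ge> 0 \<and> b \<ge> 0) \<or> (- a \<le> 0 \<and> b \<le> 0)" using root_coef_sign by blast
    have "a = 0 \<or> b = 0" using s1 s2 by linarith
    then show ?thesis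
    proof
      assume "a = 0"
      then have "b *\<^sub>R f \<in> R" using d ab by simp
      then have "b = 1 \<or> b = -1" using R_reduced[OF fR] by blast
      then show ?thesis using ab \<open>a = 0\<close> by auto
    next
      assume "b = 0"
      then have "a *\<^sub>R e \<in> R" using d ab by simp
      then have "a = 1 \<or> a = -1" using R_reduced[OF eR] by blast
      then show ?thesis using ab \<open>b = 0\<close> by auto
    qed
  qed
  define R1 where "R1 = R \<inter> {e, -e}"
  define R2 where "R2 = R \<inter> {f, -f}"
  have ne: "e \<noteq> f" "e \<noteq> -f" "-e \<noteq> f" "-e \<noteq> -f"
    using det by (auto simp: det2_def)
  have "R1 \<noteq> {}" "R2 \<noteq> {}" using eR fR unfolding R1_def R2_def by auto
  moreover have "R1 \<union> R2 = R" using sub unfolding R1_def R2_def by auto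
  moreover have "R1 \<inter> R2 = {}" using ne unfolding R1_def R2_def by auto
  moreover have "\<forall>a\<in>R1. \<forall>b\<in>R2. a \<bullet> b = 0" using ef unfolding R1_def R2_def by auto
  ultimately show False using rs unfolding root_system_def by blast
qed

lemma ef_neg: "e \<bullet> f < 0"
proof -
  have "(- 0 - 1 * ce) *\<^sub>R e + 1 *\<^sub>R f \<in> R" using se_coef[of 0 1] fR by simp
  then have "(- 0 - 1 * ce \<ge> 0 \<and> (1::real) \<ge> 0) \<or> (- 0 - 1 * ce \<le> 0 \<and> (1::real) \<le> 0)"
    using root_coef_sign by blast
  then have "ce \<le> 0" by simp
  then have "f \<bullet> e \<le> 0" using ee_pos unfolding ce_def by (simp add: divide_le_0_iff)
  then show ?thesis using ef_nonzero by (simp add: inner_commute)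
qed

lemma cartan:
  obtains x y :: int where "ce = of_int x" "cf = of_int y" "cases5 x y"
proof -
  obtain x where x: "ce = of_int x" using R_int[OF eR fR] unfolding ce_def by (metis Ints_cases)
  obtain y where y: "cf = of_int y" using R_int[OF fR eR] unfolding cf_def by (metis Ints_cases)
  have "ce < 0" unfolding ce_def using ef_neg ee_pos by (simp add: divide_neg_pos inner_commute)
  then have x0: "x < 0" using x by simp
  have "cf < 0" unfolding cf_def using ef_neg ff_pos by (simp add: divide_neg_pos)
  then have y0: "y < 0" using y by simp
  have l: "(e \<bullet> e) * (f \<bullet> f) - (e \<bullet> f)^2 > 0" using lagrange2[of e f] det by simp
  have "ce * cf = 4 * (e \<bullet> f)^2 / ((e \<bullet> e) * (f \<bullet> f))"
    unfolding ce_def cf_def by (simp add: inner_commute power2_eq_square)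
  also have "\<dots> < 4" using l ee_pos ff_pos by (simp add: divide_less_eq)
  finally have "of_int (x * y) < (4::real)" using x y by simp
  then have "x * y < 4" by linarith
  then show ?thesis using that x y int_cases5 x0 y0 by blast
qed

lemma classification_aux:
  assumes c: "cases5 x y" "ce = of_int x" "cf = of_int y"
  shows "\<forall>a b. a *\<^sub>R e + b *\<^sub>R f \<in> R \<longrightarrow> a \<ge> 0 \<longrightarrow> b \<ge> 0 \<longrightarrow> a + b \<le> real n \<longrightarrow> (a, b) \<in> set (Lc x y)"
proof (induction n)
  case 0
  show ?case
  proof (intro allI impI)
    fix a b :: real
    assume h: "a *\<^sub>R e + b *\<^sub>R f \<in> R" "a \<ge> 0" "b \<ge> 0" "a + b \<le> real 0"
    then have "a = 0" "b = 0" by simp_all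
    then show "(a, b) \<in> set (Lc x y)" using h(1) R_nz by force
  qed
next
  case (Suc n)
  show ?case
  proof (intro allI impI)
    fix a b :: real
    let ?d = "a *\<^sub>R e + b *\<^sub>R f"
    assume h: "?d \<in> R" "a \<ge> 0" "b \<ge> 0" "a + b \<le> real (Suc n)"
    have dd: "?d \<bullet> ?d > 0" using R_nz[OF h(1)] by simp
    have "?d \<bullet> ?d = a * (?d \<bullet> e) + b * (?d \<bullet> f)" by (simp add: inner_add_right)
    then have "?d \<bullet> e > 0 \<or> ?d \<bullet> f > 0" using dd h(2,3)
      by (smt (verit) mult_nonneg_nonpos)
    then show "(a, b) \<in> set (Lc x y)"
    proof
      assume de: "?d \<bullet> e > 0"
      define k where "k = 2 * a + b * ce"
      have k: "k = 2 * (?d \<bullet> e) / (e \<bullet> e)"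
        using ee_pos unfolding k_def ce_def by (simp add: inner_add_left field_simps)
      have kpos: "k > 0" using k de ee_pos by simp
      have "k \<in> \<int>" using R_int[OF eR h(1)] k by simp
      then have k1: "k \<ge> 1" using kpos by (metis Ints_cases of_int_0_less_iff zero_less_one_class.zero_le_one int_one_le_iff_zero_less of_int_1_le_iff)
      show ?thesis
      proof (cases "b = 0")
        case True
        then have "a *\<^sub>R e \<in> R" using h(1) by simp
        then have "a = 1 \<or> a = -1" using R_reduced[OF eR] by blast
        then have "a = 1" using h(2) by auto
        then show ?thesis using True c(1) unfolding cases5_def Lc_def by auto
      next
        case False
        have r: "(- a - b * ce) *\<^sub>R e + b *\<^sub>R f \<in> R" using se_coef h(1) by blast
        have eqk: "(- a - b * ce) = a - k" unfolding k_def by simp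
        have r': "(a - k) *\<^sub>R e + b *\<^sub>R f \<in> R" using r by (simp only: eqk)
        have "a - k \<ge> 0" using root_coef_sign[OF r' refl] h(3) False by auto
        moreover have "(a - k) + b \<le> real n" using h(4) k1 by simp
        ultimately have "(a - k, b) \<in> set (Lc x y)" using Suc.IH r' h(3) by blast
        from Lc_closed_e[OF c(1) this] have "(- (a - k) - b * of_int x, b) \<in> set (Lc x y)"
          using h(3) False by simp
        moreover have e3: "- (a - k) - b * of_int x = a" using c(2) unfolding k_def by simp
        ultimately show ?thesis by (simp only: e3)
      qed
    next
      assume df: "?d \<bullet> f > 0"
      define k where "k = a * cf + 2 * b"
      have k: "k = 2 * (?d \<bullet> f) / (f \<bullet> f)"
        using ff_pos unfolding k_def cf_def by (simp add: inner_add_left inner_add_right field_simps inner_commute)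
      have kpos: "k > 0" using k df ff_pos by simp
      have "k \<in> \<int>" using R_int[OF fR h(1)] k by simp
      then have k1: "k \<ge> 1" using kpos by (metis Ints_cases of_int_0_less_iff zero_less_one_class.zero_le_one int_one_le_iff_zero_less of_int_1_le_iff)
      show ?thesis
      proof (cases "a = 0")
        case True
        then have "b *\<^sub>R f \<in> R" using h(1) by simp
        then have "b = 1 \<or> b = -1" using R_reduced[OF fR] by blast
        then have "b = 1" using h(3) by auto
        then show ?thesis using True c(1) unfolding cases5_def Lc_def by auto
      next
        case False
        have r: "a *\<^sub>R e + (- b - a * cf) *\<^sub>R f \<in> R" using sf_coef h(1) by blast
        have eqk: "(- b - a * cf) = b - k" unfolding k_def by simp
        have r': "a *\<^sub>R e + (b - k) *\<^sub>R f \<in> R" using r by (simp only: eqk)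
        have "b - k \<ge> 0" using root_coef_sign[OF r' refl] h(2) False by auto
        moreover have "a + (b - k) \<le> real n" using h(4) k1 by simp
        ultimately have "(a, b - k) \<in> set (Lc x y)" using Suc.IH r' h(2) by blast
        from Lc_closed_f[OF c(1) this] have "(a, - (b - k) - a * of_int y) \<in> set (Lc x y)"
          using h(2) False by simp
        moreover have e3: "- (b - k) - a * of_int y = b" using c(3) unfolding k_def by simp
        ultimately show ?thesis by (simp only: e3)
      qed
    qed
  qed
qed

lemma classification:
  assumes c: "cases5 x y" "ce = of_int x" "cf = of_int y"
    and d: "a *\<^sub>R e + b *\<^sub>R f \<in> R" "a \<ge> 0" "b \<ge> 0"
  shows "(a, b) \<in> set (Lc x y)"
proof -
  obtain n :: nat where "a + b \<le> real n" using real_arch_simple by blast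
  then show ?thesis using classification_aux[OF c, of n] d by blast
qed

lemma Lc_roots:
  assumes c: "cases5 x y" "ce = of_int x" "cf = of_int y"
    and m: "(a, b) \<in> set (Lc x y)"
  shows "a *\<^sub>R e + b *\<^sub>R f \<in> R"
proof -
  have E: "1 *\<^sub>R e + 0 *\<^sub>R f \<in> R" and F: "0 *\<^sub>R e + 1 *\<^sub>R f \<in> R" using eR fR by simp_all
  note SE = se_coef and SF = sf_coef
  show ?thesis
    using c m
    unfolding cases5_def Lc_def
    apply (elim disjE conjE)
    subgoal using SE[OF F] E F by auto
    subgoal using SE[OF F] SF[OF E] E F by auto
    subgoal using SE[OF F] SF[OF E] E F by auto
    subgoal
    proof -
      assume cc: "ce = of_int x" "cf = of_int y" "x = -1" "y = -3"
      have a1: "1 *\<^sub>R e + 1 *\<^sub>R f \<in> R" using SE[OF F] cc by simp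
      have a2: "1 *\<^sub>R e + 3 *\<^sub>R f \<in> R" using SF[OF E] cc by simp
      have a3: "1 *\<^sub>R e + 2 *\<^sub>R f \<in> R" using SF[OF a1] cc by simp
      have a4: "2 *\<^sub>R e + 3 *\<^sub>R f \<in> R" using SE[OF a2] cc by simp
      assume "(a, b) \<in> set (if x = - 1 \<and> y = - 1 then [(1, 0), (0, 1), (1, 1)]
          else if x = - 1 \<and> y = - 2 then [(1, 0), (0, 1), (1, 1), (1, 2)]
          else if x = - 2 \<and> y = - 1 then [(1, 0), (0, 1), (1, 1), (2, 1)]
          else if x = - 1 \<and> y = - 3 then [(1, 0), (0, 1), (1, 1), (1, 2), (1, 3), (2, 3)]
          else [(1, 0), (0, 1), (1, 1), (2, 1), (3, 1), (3, 2)])"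
      then show ?thesis using cc E F a1 a2 a3 a4 by auto
    qed
    subgoal
    proof -
      assume cc: "ce = of_int x" "cf = of_int y" "x = -3" "y = -1"
      have a1: "1 *\<^sub>R e + 1 *\<^sub>R f \<in> R" using SF[OF E] cc by simp
      have a2: "3 *\<^sub>R e + 1 *\<^sub>R f \<in> R" using SE[OF F] cc by simp
      have a3: "2 *\<^sub>R e + 1 *\<^sub>R f \<in> R" using SE[OF a1] cc by simp
      have a4: "3 *\<^sub>R e + 2 *\<^sub>R f \<in> R" using SF[OF a2] cc by simp
      assume "(a, b) \<in> set (if x = - 1 \<and> y = - 1 then [(1, 0), (0, 1), (1, 1)]
          else if x = - 1 \<and> y = - 2 then [(1, 0), (0, 1), (1, 1), (1, 2)]
          else if x = - 2 \<and> y = - 1 then [(1, 0), (0, 1), (1, 1), (2, 1)]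
          else if x = - 1 \<and> y = - 3 then [(1, 0), (0, 1), (1, 1), (1, 2), (1, 3), (2, 3)]
          else [(1, 0), (0, 1), (1, 1), (2, 1), (3, 1), (3, 2)])"
      then show ?thesis using cc E F a1 a2 a3 a4 by auto
    qed
    done
qed

end



lemma lp_0:
  fixes xr yr xr' yr' xq yq a0 b0 a1 b1 ce :: real
  assumes ce: "ce = -1"
    and m0: "(a0,b0) \<in> set ([(1,0),(0,1),(1,1)] :: (real \<times> real) list)" and m1: "(a1,b1) \<in> set ([(1,0),(0,1),(1,1)] :: (real \<times> real) list)"
    and r: "xr \<ge> 0" "yr \<ge> 0" "a0*xr + b0*yr = 1" "\<forall>p\<in>set ([(1,0),(0,1),(1,1)] :: (real \<times> real) list). fst p * xr + snd p * yr \<le> 1"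
    and r': "xr' \<ge> 0" "yr' \<ge> 0" "a0*xr' + b0*yr' = 1" "\<forall>p\<in>set ([(1,0),(0,1),(1,1)] :: (real \<times> real) list). fst p * xr' + snd p * yr' \<le> 1"
    and q: "xq < 0" "yq > 0" "yq - ce * xq \<le> 0" "a0*xq + b0*yq > 1" "0 < a1*xq + b1*yq" "a1*xq + b1*yq < 1"
    and perp: "2*a0 + b0*ce \<noteq> 0"
  shows "xr = xr' \<and> yr = yr'"
  using m0 m1 r r' q perp unfolding ce
  apply simp
  apply (elim disjE)
  apply (simp_all)
  done

lemma lp_1:
  fixes xr yr xr' yr' xq yq a0 b0 a1 b1 ce :: real
  assumes ce: "ce = -1"
    and m0: "(a0,b0) \<in> set ([(1,0),(0,1),(1,1),(1,2)] :: (real \<times> real) list)" and m1: "(a1,b1) \<in> set ([(1,0),(0,1),(1,1),(1,2)] :: (real \<times> real) list)"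
    and r: "xr \<ge> 0" "yr \<ge> 0" "a0*xr + b0*yr = 1" "\<forall>p\<in>set ([(1,0),(0,1),(1,1),(1,2)] :: (real \<times> real) list). fst p * xr + snd p * yr \<le> 1"
    and r': "xr' \<ge> 0" "yr' \<ge> 0" "a0*xr' + b0*yr' = 1" "\<forall>p\<in>set ([(1,0),(0,1),(1,1),(1,2)] :: (real \<times> real) list). fst p * xr' + snd p * yr' \<le> 1"
    and q: "xq < 0" "yq > 0" "yq - ce * xq \<le> 0" "a0*xq + b0*yq > 1" "0 < a1*xq + b1*yq" "a1*xq + b1*yq < 1"
    and perp: "2*a0 + b0*ce \<noteq> 0"
  shows "xr = xr' \<and> yr = yr'"
  using m0 m1 r r' q perp unfolding ce
  apply simp
  apply (elim disjE)
  apply (simp_all)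
  done

lemma lp_2:
  fixes xr yr xr' yr' xq yq a0 b0 a1 b1 ce :: real
  assumes ce: "ce = -2"
    and m0: "(a0,b0) \<in> set ([(1,0),(0,1),(1,1),(2,1)] :: (real \<times> real) list)" and m1: "(a1,b1) \<in> set ([(1,0),(0,1),(1,1),(2,1)] :: (real \<times> real) list)"
    and r: "xr \<ge> 0" "yr \<ge> 0" "a0*xr + b0*yr = 1" "\<forall>p\<in>set ([(1,0),(0,1),(1,1),(2,1)] :: (real \<times> real) list). fst p * xr + snd p * yr \<le> 1"
    and r': "xr' \<ge> 0" "yr' \<ge> 0" "a0*xr' + b0*yr' = 1" "\<forall>p\<in>set ([(1,0),(0,1),(1,1),(2,1)] :: (real \<times> real) list). fst p * xr' + snd p * yr' \<le> 1"
    and q: "xq < 0" "yq > 0" "yq - ce * xq \<le> 0" "a0*xq + b0*yq > 1" "0 < a1*xq + b1*yq" "a1*xq + b1*yq < 1"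
    and perp: "2*a0 + b0*ce \<noteq> 0"
  shows "xr = xr' \<and> yr = yr'"
  using m0 m1 r r' q perp unfolding ce
  apply simp
  apply (elim disjE)
  apply (simp_all)
  done

lemma lp_3:
  fixes xr yr xr' yr' xq yq a0 b0 a1 b1 ce :: real
  assumes ce: "ce = -1"
    and m0: "(a0,b0) \<in> set ([(1,0),(0,1),(1,1),(1,2),(1,3),(2,3)] :: (real \<times> real) list)" and m1: "(a1,b1) \<in> set ([(1,0),(0,1),(1,1),(1,2),(1,3),(2,3)] :: (real \<times> real) list)"
    and r: "xr \<ge> 0" "yr \<ge> 0" "a0*xr + b0*yr = 1" "\<forall>p\<in>set ([(1,0),(0,1),(1,1),(1,2),(1,3),(2,3)] :: (real \<times> real) list). fst p * xr + snd p * yr \<le> 1"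
    and r': "xr' \<ge> 0" "yr' \<ge> 0" "a0*xr' + b0*yr' = 1" "\<forall>p\<in>set ([(1,0),(0,1),(1,1),(1,2),(1,3),(2,3)] :: (real \<times> real) list). fst p * xr' + snd p * yr' \<le> 1"
    and q: "xq < 0" "yq > 0" "yq - ce * xq \<le> 0" "a0*xq + b0*yq > 1" "0 < a1*xq + b1*yq" "a1*xq + b1*yq < 1"
    and perp: "2*a0 + b0*ce \<noteq> 0"
  shows "xr = xr' \<and> yr = yr'"
  using m0 m1 r r' q perp unfolding ce
  apply simp
  apply (elim disjE)
  apply (simp_all)
  done

lemma lp_4:
  fixes xr yr xr' yr' xq yq a0 b0 a1 b1 ce :: real
  assumes ce: "ce = -3"
    and m0: "(a0,b0) \<in> set ([(1,0),(0,1),(1,1),(2,1),(3,1),(3,2)] :: (real \<times> real) list)" and m1: "(a1,b1) \<in> set ([(1,0),(0,1),(1,1),(2,1),(3,1),(3,2)] :: (real \<times> real) list)"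
    and r: "xr \<ge> 0" "yr \<ge> 0" "a0*xr + b0*yr = 1" "\<forall>p\<in>set ([(1,0),(0,1),(1,1),(2,1),(3,1),(3,2)] :: (real \<times> real) list). fst p * xr + snd p * yr \<le> 1"
    and r': "xr' \<ge> 0" "yr' \<ge> 0" "a0*xr' + b0*yr' = 1" "\<forall>p\<in>set ([(1,0),(0,1),(1,1),(2,1),(3,1),(3,2)] :: (real \<times> real) list). fst p * xr' + snd p * yr' \<le> 1"
    and q: "xq < 0" "yq > 0" "yq - ce * xq \<le> 0" "a0*xq + b0*yq > 1" "0 < a1*xq + b1*yq" "a1*xq + b1*yq < 1"
    and perp: "2*a0 + b0*ce \<noteq> 0"
  shows "xr = xr' \<and> yr = yr'"
  using m0 m1 r r' q perp unfolding ce
  apply simp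
  apply (elim disjE)
  apply (simp_all)
  done

lemma LP_all:
  fixes xr yr xr' yr' xq yq a0 b0 a1 b1 :: real
  assumes c: "cases5 x y"
    and m0: "(a0,b0) \<in> set (Lc x y)" and m1: "(a1,b1) \<in> set (Lc x y)"
    and r: "xr \<ge> 0" "yr \<ge> 0" "a0*xr + b0*yr = 1" "\<forall>p\<in>set (Lc x y). fst p * xr + snd p * yr \<le> 1"
    and r': "xr' \<ge> 0" "yr' \<ge> 0" "a0*xr' + b0*yr' = 1" "\<forall>p\<in>set (Lc x y). fst p * xr' + snd p * yr' \<le> 1"
    and q: "xq < 0" "yq > 0" "yq - of_int x * xq \<le> 0" "a0*xq + b0*yq > 1" "0 < a1*xq + b1*yq" "a1*xq + b1*yq < 1"
    and perp: "2*a0 + b0 * of_int x \<noteq> 0"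
  shows "xr = xr' \<and> yr = yr'"
  using c unfolding cases5_def
proof (elim disjE conjE)
  assume h: "x = -1" "y = -1"
  have L: "Lc x y = [(1,0),(0,1),(1,1)]" using h by (simp add: Lc_def)
  have X: "(of_int x::real) = -1" using h by simp
  show ?thesis by (rule lp_0[OF X m0[unfolded L] m1[unfolded L] r(1-3) r(4)[unfolded L] r'(1-3) r'(4)[unfolded L] q perp])
next
  assume h: "x = -1" "y = -2"
  have L: "Lc x y = [(1,0),(0,1),(1,1),(1,2)]" using h by (simp add: Lc_def)
  have X: "(of_int x::real) = -1" using h by simp
  show ?thesis by (rule lp_1[OF X m0[unfolded L] m1[unfolded L] r(1-3) r(4)[unfolded L] r'(1-3) r'(4)[unfolded L] q perp])
next
  assume h: "x = -2" "y = -1"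
  have L: "Lc x y = [(1,0),(0,1),(1,1),(2,1)]" using h by (simp add: Lc_def)
  have X: "(of_int x::real) = -2" using h by simp
  show ?thesis by (rule lp_2[OF X m0[unfolded L] m1[unfolded L] r(1-3) r(4)[unfolded L] r'(1-3) r'(4)[unfolded L] q perp])
next
  assume h: "x = -1" "y = -3"
  have L: "Lc x y = [(1,0),(0,1),(1,1),(1,2),(1,3),(2,3)]" using h by (simp add: Lc_def)
  have X: "(of_int x::real) = -1" using h by simp
  show ?thesis by (rule lp_3[OF X m0[unfolded L] m1[unfolded L] r(1-3) r(4)[unfolded L] r'(1-3) r'(4)[unfolded L] q perp])
next
  assume h: "x = -3" "y = -1"
  have L: "Lc x y = [(1,0),(0,1),(1,1),(2,1),(3,1),(3,2)]" using h by (simp add: Lc_def)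
  have X: "(of_int x::real) = -3" using h by simp
  show ?thesis by (rule lp_4[OF X m0[unfolded L] m1[unfolded L] r(1-3) r(4)[unfolded L] r'(1-3) r'(4)[unfolded L] q perp])
qed

lemma Lc_pos: "(a,b) \<in> set (Lc x y) \<Longrightarrow> a \<ge> 0 \<and> b \<ge> 0 \<and> a + b > 0"
  unfolding Lc_def by (auto split: if_splits)


lemma sign3:
  fixes A B C m :: real
  assumes "A * B < 0" "(- m) * B \<ge> 0" "(- m) * C \<ge> 0" "m \<noteq> 0" "B \<noteq> 0" "C \<noteq> 0"
  shows "A * C < 0"
  using assms by (auto simp: mult_less_0_iff mult_le_0_iff zero_le_mult_iff)

lemma prod_same_sign:
  fixes a b X Y P Q :: real
  assumes "(a \<ge> 0 \<and> b \<ge> 0) \<or> (a \<le> 0 \<and> b \<le> 0)" "X > 0" "Y > 0" "P > 0" "Q > 0"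
  shows "(a * X + b * Y) * (a * P + b * Q) \<ge> 0"
  using assms(1)
proof
  assume "a \<ge> 0 \<and> b \<ge> 0"
  then show ?thesis using assms(2-5) by (intro mult_nonneg_nonneg add_nonneg_nonneg) auto
next
  assume "a \<le> 0 \<and> b \<le> 0"
  then have "a * X + b * Y \<le> 0" "a * P + b * Q \<le> 0" using assms(2-5)
    by (simp_all add: add_nonpos_nonpos mult_nonpos_nonneg)
  then show ?thesis by (rule mult_nonpos_nonpos)
qed

lemma hyp_neg0: "hyp (- \<beta>) 0 = hyp \<beta> 0"
  by (auto simp: hyp_def)

lemma refl_neg0: "refl (- \<beta>) 0 = refl \<beta> 0"
  by (rule ext) (simp add: refl_def algebra_simps)

lemma hyp_negk: "hyp (- \<beta>) (- k) = hyp \<beta> k"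
  by (auto simp: hyp_def)

lemma refl_negk: "refl (- \<beta>) (- k) = refl \<beta> k"
  using refl_scale[of "-1" "- k" k \<beta>] by simp

context aff0 begin

lemma word_fix0:
  assumes "set js \<subseteq> {1,2}" "kk 1 = 0" "kk 2 = 0"
  shows "word s js 0 = 0"
  using assms(1)
proof (induction js)
  case Nil then show ?case by simp
next
  case (Cons j js)
  have j: "j \<in> {1,2}" using Cons.prems by auto
  then have "s j = refl (bv j) 0" using s_def' assms(2,3) by auto
  then show ?case using Cons refl_zero_fix by simp
qed



lemma main:
  assumes z: "0 \<in> closure A0"
    and kk0: "kk 0 \<noteq> 0" and kk12: "kk 1 = 0" "kk 2 = 0"
    and hne: "hyp (bv 1) 0 \<noteq> hyp (bv 2) 0"
    and aR: "\<alpha> \<in> R"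
    and strip1: "w ` A0 \<subseteq> strip \<alpha> c" and strip2: "A0 \<subseteq> strip \<alpha> c"
    and i: "i \<in> {1, 2}"
    and desc: "right_descents s w = {0, i}"
    and nc: "s 0 \<circ> s i \<circ> s 0 \<circ> s i \<noteq> id"
  shows "\<forall>u \<in> (\<lambda>v. w \<circ> v) ` W0 s. len s (w \<circ> s i) \<le> len s u"
proof -
  have i3: "i \<in> {0,1,2}" using i by auto
  have wG: "w \<in> G"
  proof (rule ccontr)
    assume "w \<notin> G"
    then have "len s (w \<circ> s 0) = len s w" using notG_len by simp
    moreover have "0 \<in> right_descents s w" using desc by simp
    ultimately show False unfolding right_descents_def by simp
  qed
  have desc_iff: "j \<in> right_descents s w \<longleftrightarrow> w ` Hj j \<in> Sep w" if j: "j \<in> {0,1,2}" for j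
    using len_step[OF wG j] j unfolding right_descents_def by auto
  define i' where "i' = 3 - i"
  have i': "i' \<in> {1,2}" "i' \<noteq> i" "i' \<in> {0,1,2}" using i unfolding i'_def by auto
  have D0: "w ` Hj 0 \<in> Sep w" using desc_iff[of 0] desc by simp
  have Di: "w ` Hj i \<in> Sep w" using desc_iff[OF i3] desc by simp
  have Di': "w ` Hj i' \<notin> Sep w" using desc_iff[OF i'(3)] desc i'(1,2) by auto
  obtain winv where winv: "winv \<in> G" "winv \<circ> w = id" "w \<circ> winv = id" using G_inv[OF wG] by blast
  define q where "q = winv p0"
  have wq: "w q = p0" using winv(3) unfolding q_def by (metis comp_apply id_apply)
  have injw: "inj w" using G_bij[OF wG] bij_is_inj by blast
  have sepq: "w ` Hj j \<in> Sep w \<longleftrightarrow> sepH (Hj j) q p0" if j: "j \<in> {0,1,2}" for j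
  proof -
    have HJ: "w ` Hj j \<in> HS" using G_image[OF wG Hj_HS[OF j]] .
    have "w ` Hj j \<in> Sep w \<longleftrightarrow> sepH (w ` Hj j) (w q) (w p0)" unfolding Sep_def using HJ wq by simp
    also have "\<dots> \<longleftrightarrow> sepH (w -` (w ` Hj j)) q p0" using G_sep_transfer[OF wG HJ] .
    also have "w -` (w ` Hj j) = Hj j" using injw by (simp add: inj_vimage_image_eq)
    finally show ?thesis .
  qed
  have q0: "sepH (Hj 0) q p0" using sepq[of 0] D0 by simp
  have qi: "sepH (Hj i) q p0" using sepq[OF i3] Di by simp
  have qi': "\<not> sepH (Hj i') q p0" using sepq[OF i'(3)] Di' by simp
  have q_off: "q \<bullet> \<delta> \<noteq> of_int m" if "\<delta> \<in> R" for \<delta> m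
    using G_off_hyp[OF winv(1) p0 that] unfolding q_def by blast
  define e where "e = (if p0 \<bullet> bv i > 0 then bv i else - bv i)"
  define f where "f = (if p0 \<bullet> bv i' > 0 then bv i' else - bv i')"
  have biR: "bv i \<in> R" "bv i' \<in> R" using b_R i3 i'(3) by auto
  have eR: "e \<in> R" and fR: "f \<in> R" unfolding e_def f_def using biR R_neg by auto
  have ep: "p0 \<bullet> e > 0"
    using A0_off_hyp[OF p0 biR(1), of 0] unfolding e_def by (auto simp: inner_minus_right)
  have fp: "p0 \<bullet> f > 0"
    using A0_off_hyp[OF p0 biR(2), of 0] unfolding f_def by (auto simp: inner_minus_right)
  have kki: "kk i = 0" "kk i' = 0" using kk12 i i'(1) by auto
  have he: "hyp e 0 = Hj i" unfolding e_def Hj_def kki by (simp add: hyp_neg0)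
  have hf: "hyp f 0 = Hj i'" unfolding f_def Hj_def kki by (simp add: hyp_neg0)
  have se: "s i = refl e 0" unfolding e_def using s_def'[OF i3] kki by (simp add: refl_neg0)
  have "Hj i \<noteq> Hj i'" using hne i i'(1,2) kki unfolding Hj_def by (auto simp: kk12)
  then have det: "det2 e f \<noteq> 0" using det2_nonpar[OF R_nz[OF eR] R_nz[OF fR]] he hf by simp
  obtain p1 where p1: "p1 \<in> closure A0" "p1 \<bullet> e = 0" "p1 \<noteq> 0"
  proof -
    obtain x y where xy: "x \<noteq> y" "x \<in> Hj i" "x \<in> closure A0" "y \<in> Hj i" "y \<in> closure A0"
      using walls i3 unfolding wall_def Hj_def by blast
    have "x \<bullet> e = 0" "y \<bullet> e = 0" using xy he[symmetric] by (auto simp: hyp_def)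
    then show ?thesis using that xy by (cases "x = 0") auto
  qed
  obtain p2 where p2: "p2 \<in> closure A0" "p2 \<bullet> f = 0" "p2 \<noteq> 0"
  proof -
    obtain x y where xy: "x \<noteq> y" "x \<in> Hj i'" "x \<in> closure A0" "y \<in> Hj i'" "y \<in> closure A0"
      using walls i'(3) unfolding wall_def Hj_def by blast
    have "x \<bullet> f = 0" "y \<bullet> f = 0" using xy hf[symmetric] by (auto simp: hyp_def)
    then show ?thesis using that xy by (cases "x = 0") auto
  qed
  interpret C: chamber R s A0 p0 bv kk e f p1 p2
    by unfold_locales (use eR fR ep fp det p1 p2 in auto)
  have pos_le1: "y \<bullet> \<delta> \<le> 1" if "\<delta> \<in> R" "p0 \<bullet> \<delta> > 0" "y \<in> closure A0" for \<delta> y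
  proof -
    have "(0 \<bullet> \<delta> - of_int 1) * (p0 \<bullet> \<delta> - of_int 1) \<ge> 0" using closure_sign[OF that(1) z] .
    then have "p0 \<bullet> \<delta> \<le> 1" by (simp add: mult_le_0_iff)
    moreover have "p0 \<bullet> \<delta> \<noteq> 1" using A0_off_hyp[OF p0 that(1), of 1] by simp
    ultimately have lt: "p0 \<bullet> \<delta> < 1" by simp
    have "(y \<bullet> \<delta> - of_int 1) * (p0 \<bullet> \<delta> - of_int 1) \<ge> 0" using closure_sign[OF that(1,3)] .
    then show ?thesis using lt by (simp add: zero_le_mult_iff)
  qed
  have cl_e: "y \<bullet> e \<ge> 0" "y \<bullet> f \<ge> 0" if "y \<in> closure A0" for y
  proof -
    have "(y \<bullet> e - of_int 0) * (p0 \<bullet> e - of_int 0) \<ge> 0" using closure_sign[OF eR that] .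
    then show "y \<bullet> e \<ge> 0" using ep by (simp add: zero_le_mult_iff)
    have "(y \<bullet> f - of_int 0) * (p0 \<bullet> f - of_int 0) \<ge> 0" using closure_sign[OF fR that] .
    then show "y \<bullet> f \<ge> 0" using fp by (simp add: zero_le_mult_iff)
  qed
  have b0R: "bv 0 \<in> R" using b_R by simp
  obtain \<beta> k where bk: "\<beta> \<in> R" "k > 0" "Hj 0 = hyp \<beta> k" "s 0 = refl \<beta> k" "p0 \<bullet> \<beta> < of_int k"
  proof (cases "kk 0 > 0")
    case True
    have "(0 \<bullet> bv 0 - of_int (kk 0)) * (p0 \<bullet> bv 0 - of_int (kk 0)) \<ge> 0" using closure_sign[OF b0R z] .
    then have "p0 \<bullet> bv 0 \<le> of_int (kk 0)" using True by (simp add: mult_le_0_iff)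
    moreover have "p0 \<bullet> bv 0 \<noteq> of_int (kk 0)" using A0_off_hyp[OF p0 b0R] by blast
    ultimately show ?thesis using that[of "bv 0" "kk 0"] b0R True s_def'[of 0] unfolding Hj_def by simp
  next
    case False
    then have kn: "kk 0 < 0" using kk0 by simp
    have "(0 \<bullet> bv 0 - of_int (kk 0)) * (p0 \<bullet> bv 0 - of_int (kk 0)) \<ge> 0" using closure_sign[OF b0R z] .
    then have "p0 \<bullet> bv 0 \<ge> of_int (kk 0)" using kn by (auto simp: mult_le_0_iff)
    moreover have "p0 \<bullet> bv 0 \<noteq> of_int (kk 0)" using A0_off_hyp[OF p0 b0R] by blast
    ultimately have "p0 \<bullet> (- bv 0) < of_int (- kk 0)" by (simp add: inner_minus_right)
    moreover have "Hj 0 = hyp (- bv 0) (- kk 0)" unfolding Hj_def by (simp add: hyp_negk)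
    moreover have "s 0 = refl (- bv 0) (- kk 0)" using s_def'[of 0] by (simp add: refl_negk)
    ultimately show ?thesis using that[of "- bv 0" "- kk 0"] R_neg[OF b0R] kn by simp
  qed
  obtain r r' where rr: "r \<noteq> r'" "r \<in> Hj 0" "r \<in> closure A0" "r' \<in> Hj 0" "r' \<in> closure A0"
    using walls unfolding wall_def Hj_def by force
  have rb: "r \<bullet> \<beta> = of_int k" "r' \<bullet> \<beta> = of_int k" using rr bk(3) by (auto simp: hyp_def)
  obtain a0 b0 where ab0: "\<beta> = a0 *\<^sub>R e + b0 *\<^sub>R f" using C.coef_ex by blast
  have bpos: "p0 \<bullet> \<beta> > 0"
  proof (rule ccontr)
    assume "\<not> p0 \<bullet> \<beta> > 0"
    then have negpos: "p0 \<bullet> (- \<beta>) > 0" using C.root_p0[OF bk(1)] by (simp add: inner_minus_right)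
    have negeq: "- \<beta> = (- a0) *\<^sub>R e + (- b0) *\<^sub>R f" using ab0 by simp
    have na: "- a0 \<ge> 0" "- b0 \<ge> 0" using C.root_pos_coef[OF R_neg[OF bk(1)] negeq negpos] by auto
    have rbe: "r \<bullet> \<beta> = a0 * (r \<bullet> e) + b0 * (r \<bullet> f)" using ab0 by (simp add: inner_add_right)
    have "a0 * (r \<bullet> e) \<le> 0" "b0 * (r \<bullet> f) \<le> 0"
      using na cl_e[OF rr(3)] by (simp_all add: mult_nonpos_nonneg)
    then have "r \<bullet> \<beta> \<le> 0" using rbe by simp
    then show False using rb bk(2) by simp
  qed
  have "of_int k \<le> (1::real)" using pos_le1[OF bk(1) bpos rr(3)] rb by simp
  then have k1: "k = 1" using bk(2) by simp
  have ab0pos: "a0 \<ge> 0" "b0 \<ge> 0" using C.root_pos_coef[OF bk(1) ab0 bpos] by auto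
  obtain x y where xy: "C.ce = of_int x" "C.cf = of_int y" "cases5 x y" using C.cartan by blast
  have m0: "(a0, b0) \<in> set (Lc x y)" using C.classification[OF xy(3,1,2)] bk(1) ab0 ab0pos by simp
  have Lroot: "fst p * (y' \<bullet> e) + snd p * (y' \<bullet> f) \<le> 1" if "p \<in> set (Lc x y)" "y' \<in> closure A0" for p y'
  proof -
    obtain a b where p: "p = (a, b)" by fastforce
    have d: "a *\<^sub>R e + b *\<^sub>R f \<in> R" using C.Lc_roots[OF xy(3,1,2)] that(1) p by simp
    have "a \<ge> 0 \<and> b \<ge> 0 \<and> a + b > 0" using Lc_pos that(1) p by simp
    then have "p0 \<bullet> (a *\<^sub>R e + b *\<^sub>R f) > 0" using ep fp
      by (simp add: inner_add_right) (smt (verit) mult_nonneg_nonneg mult_pos_pos)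
    then have "y' \<bullet> (a *\<^sub>R e + b *\<^sub>R f) \<le> 1" using pos_le1[OF d _ that(2)] by blast
    then show ?thesis using p by (simp add: inner_add_right)
  qed
  obtain \<alpha>' c' where ac: "\<alpha>' \<in> R" "\<forall>y. w y \<bullet> \<alpha> - of_int c = y \<bullet> \<alpha>' - of_int c'"
    using G_transfer[OF wG aR] by blast
  have sp0: "of_int c < w p0 \<bullet> \<alpha> \<and> w p0 \<bullet> \<alpha> < of_int c + 1" using strip1 p0 unfolding strip_def by blast
  have sq: "of_int c < w q \<bullet> \<alpha> \<and> w q \<bullet> \<alpha> < of_int c + 1" using strip2 p0 wq unfolding strip_def by auto
  have t1: "w p0 \<bullet> \<alpha> - of_int c = p0 \<bullet> \<alpha>' - of_int c'" "w q \<bullet> \<alpha> - of_int c = q \<bullet> \<alpha>' - of_int c'"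
    using ac(2) by blast+
  have A1: "0 < p0 \<bullet> \<alpha>' - of_int c'" "p0 \<bullet> \<alpha>' - of_int c' < 1" using sp0 t1(1) by linarith+
  have A2: "0 < q \<bullet> \<alpha>' - of_int c'" "q \<bullet> \<alpha>' - of_int c' < 1" using sq t1(2) by linarith+
  have "(0 \<bullet> \<alpha>' - of_int c') * (p0 \<bullet> \<alpha>' - of_int c') \<ge> 0" using closure_sign[OF ac(1) z] .
  then have "(of_int c'::real) \<le> 0" using A1 by (auto simp: mult_le_0_iff zero_le_mult_iff)
  then have c1: "c' \<le> 0" by simp
  have "(0 \<bullet> \<alpha>' - of_int (c' + 1)) * (p0 \<bullet> \<alpha>' - of_int (c' + 1)) \<ge> 0" using closure_sign[OF ac(1) z] .
  then have "(of_int (c' + 1)::real) \<ge> 0" using A1 by (auto simp: mult_le_0_iff zero_le_mult_iff)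
  then have c2: "c' \<ge> -1" by simp
  obtain \<alpha>0 where a0: "\<alpha>0 \<in> R" "0 < p0 \<bullet> \<alpha>0" "0 < q \<bullet> \<alpha>0" "q \<bullet> \<alpha>0 < 1"
  proof (cases "c' = 0")
    case True then show ?thesis using that[of \<alpha>'] ac(1) A1 A2 by simp
  next
    case False
    then have "c' = -1" using c1 c2 by simp
    then show ?thesis using that[of "- \<alpha>'"] R_neg[OF ac(1)] A1 A2 by (simp add: inner_minus_right)
  qed
  obtain a1 b1 where ab1: "\<alpha>0 = a1 *\<^sub>R e + b1 *\<^sub>R f" using C.coef_ex by blast
  have ab1pos: "a1 \<ge> 0" "b1 \<ge> 0" using C.root_pos_coef[OF a0(1) ab1 a0(2)] by auto
  have m1: "(a1, b1) \<in> set (Lc x y)" using C.classification[OF xy(3,1,2)] a0(1) ab1 ab1pos by simp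
  have qe: "q \<bullet> e < 0"
  proof -
    have "sepH (hyp e 0) q p0" using qi he by simp
    then have "(q \<bullet> e - of_int 0) * (p0 \<bullet> e - of_int 0) < 0" using sepH_hyp[OF R_nz[OF eR]] by blast
    then show ?thesis using ep by (simp add: mult_less_0_iff)
  qed
  have qf: "q \<bullet> f > 0"
  proof -
    have "\<not> sepH (hyp f 0) q p0" using qi' hf by simp
    then have "\<not> (q \<bullet> f - of_int 0) * (p0 \<bullet> f - of_int 0) < 0" using sepH_hyp[OF R_nz[OF fR]] by blast
    then have "q \<bullet> f \<ge> 0" using fp by (simp add: mult_less_0_iff)
    moreover have "q \<bullet> f \<noteq> 0" using q_off[OF fR, of 0] by simp
    ultimately show ?thesis by simp
  qed
  have qb: "q \<bullet> \<beta> > 1"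
  proof -
    have "sepH (hyp \<beta> 1) q p0" using q0 bk(3) k1 by simp
    then have "(q \<bullet> \<beta> - of_int 1) * (p0 \<bullet> \<beta> - of_int 1) < 0" using sepH_hyp[OF R_nz[OF bk(1)]] by blast
    then show ?thesis using bk(5) k1 by (simp add: mult_less_0_iff)
  qed
  have perp: "\<beta> \<bullet> e \<noteq> 0"
  proof
    assume be: "\<beta> \<bullet> e = 0"
    have comm: "refl \<beta> 1 (refl e 0 v) = refl e 0 (refl \<beta> 1 v)" for v
      using refl_conj[OF R_nz[OF bk(1)] R_nz[OF eR], of 0 0 0 1 v] be by (simp add: inner_commute)
    have s0: "s 0 = refl \<beta> 1" using bk(4) k1 by simp
    have "s 0 \<circ> s i \<circ> s 0 \<circ> s i = id"
    proof
      fix v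
      have "(s 0 \<circ> s i \<circ> s 0 \<circ> s i) v = s 0 (s i (s 0 (s i v)))" by simp
      also have "\<dots> = s 0 (s 0 (s i (s i v)))" unfolding s0 se using comm by simp
      also have "\<dots> = v" using s_invol[of 0] s_invol[OF i3] by simp
      finally show "(s 0 \<circ> s i \<circ> s 0 \<circ> s i) v = id v" by simp
    qed
    then show False using nc by simp
  qed
  have perp': "2 * a0 + b0 * of_int x \<noteq> 0"
  proof
    assume h: "2 * a0 + b0 * of_int x = 0"
    have "\<beta> \<bullet> e = a0 * (e \<bullet> e) + b0 * (f \<bullet> e)" using ab0 by (simp add: inner_add_left)
    also have "\<dots> = (e \<bullet> e) / 2 * (2 * a0 + b0 * C.ce)"
      using C.ee_pos unfolding C.ce_def by (simp add: field_simps)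
    also have "\<dots> = 0" using h xy(1) by simp
    finally show False using perp by simp
  qed
  have gpos: "q \<bullet> f - C.ce * (q \<bullet> e) > 0"
  proof (rule ccontr)
    assume "\<not> ?thesis"
    then have g0: "q \<bullet> f - of_int x * (q \<bullet> e) \<le> 0" using xy(1) by simp
    have r1: "a0 * (r \<bullet> e) + b0 * (r \<bullet> f) = 1" "a0 * (r' \<bullet> e) + b0 * (r' \<bullet> f) = 1"
      using rb k1 ab0 by (simp_all add: inner_add_right)
    have L1: "\<forall>p\<in>set (Lc x y). fst p * (r \<bullet> e) + snd p * (r \<bullet> f) \<le> 1"
      "\<forall>p\<in>set (Lc x y). fst p * (r' \<bullet> e) + snd p * (r' \<bullet> f) \<le> 1"
      using Lroot rr(3,5) by blast+
    have q1: "a0 * (q \<bullet> e) + b0 * (q \<bullet> f) > 1" using qb ab0 by (simp add: inner_add_right)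
    have q2: "0 < a1 * (q \<bullet> e) + b1 * (q \<bullet> f)" "a1 * (q \<bullet> e) + b1 * (q \<bullet> f) < 1"
      using a0(3,4) ab1 by (simp_all add: inner_add_right)
    have "r \<bullet> e = r' \<bullet> e \<and> r \<bullet> f = r' \<bullet> f"
      by (rule LP_all[OF xy(3) m0 m1 cl_e(1)[OF rr(3)] cl_e(2)[OF rr(3)] r1(1) L1(1)
            cl_e(1)[OF rr(5)] cl_e(2)[OF rr(5)] r1(2) L1(2) qe qf g0 q1 q2 perp'])
    then have "r = r'" using det2_determined[OF det] by blast
    then show False using rr(1) by simp
  qed
  \<comment> \<open>q lies in the chamber of s_i A0 at the origin\<close>
  have sfe: "2 * (f \<bullet> e) / (e \<bullet> e) = C.ce" unfolding C.ce_def ..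
  have siq_e: "s i q \<bullet> e > 0"
    using refl_inner_self[OF R_nz[OF eR], of 0 q] qe unfolding se by simp
  have siq_f: "s i q \<bullet> f > 0"
  proof -
    have "s i q \<bullet> f - of_int 0 = q \<bullet> (f - C.ce *\<^sub>R e) - (of_int 0 - of_int 0 * C.ce)"
      using refl_inner[of e 0 q f 0] unfolding se sfe .
    then have "s i q \<bullet> f = q \<bullet> f - C.ce * (q \<bullet> e)" by (simp add: inner_diff_right)
    then show ?thesis using gpos by simp
  qed
  have claim: "(q \<bullet> \<delta>) * (s i p0 \<bullet> \<delta>) \<ge> 0" if d: "\<delta> \<in> R" for \<delta>
  proof -
    define \<delta>' where "\<delta>' = \<delta> - (2 * (\<delta> \<bullet> e) / (e \<bullet> e)) *\<^sub>R e"
    have d': "\<delta>' \<in> R" unfolding \<delta>'_def using R_refl[OF eR d] .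
    have tr: "s i v \<bullet> \<delta> = v \<bullet> \<delta>'" for v
      using refl_inner[of e 0 v \<delta> 0] unfolding se \<delta>'_def by simp
    have sq2: "s i (s i q) = q" using s_invol[OF i3] .
    have e1: "q \<bullet> \<delta> = s i q \<bullet> \<delta>'" using tr[of "s i q"] sq2 by simp
    have e2: "s i p0 \<bullet> \<delta> = p0 \<bullet> \<delta>'" using tr[of p0] .
    obtain a b where ab: "\<delta>' = a *\<^sub>R e + b *\<^sub>R f" using C.coef_ex by blast
    have sg: "(a \<ge> 0 \<and> b \<ge> 0) \<or> (a \<le> 0 \<and> b \<le> 0)" using C.root_coef_sign[OF d' ab] .
    have "(a * (s i q \<bullet> e) + b * (s i q \<bullet> f)) * (a * (p0 \<bullet> e) + b * (p0 \<bullet> f)) \<ge> 0"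
      by (rule prod_same_sign[OF sg siq_e siq_f ep fp])
    then show ?thesis unfolding e1 e2 ab by (simp add: inner_add_right)
  qed
  have wsG: "w \<circ> s i \<in> G" using G_comp[OF wG G_s[OF i3]] .
  show ?thesis
  proof
    fix u assume "u \<in> (\<lambda>v. w \<circ> v) ` W0 s"
    then obtain js where js: "set js \<subseteq> {1,2}" "u = w \<circ> word s js" unfolding W0_def by blast
    define v where "v = word s js"
    have vG: "v \<in> G" unfolding v_def using js(1) by (intro word_G) auto
    have v0: "v 0 = 0" unfolding v_def using word_fix0[OF js(1) kk12] .
    have uG: "u \<in> G" using G_comp[OF wG vG] js(2) unfolding v_def by simp
    have si0: "s i 0 = 0" using se refl_zero_fix by simp
    have "Sep (w \<circ> s i) \<subseteq> Sep u"
    proof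
      fix H assume H: "H \<in> Sep (w \<circ> s i)"
      then have HH: "H \<in> HS" and sp: "sepH H p0 (w (s i p0))" unfolding Sep_def by auto
      obtain \<gamma> m where Hg: "\<gamma> \<in> R" "H = hyp \<gamma> m" using HH unfolding hyperplanes_def by blast
      obtain \<gamma>' m' where tr: "\<gamma>' \<in> R" "\<forall>y. w y \<bullet> \<gamma> - of_int m = y \<bullet> \<gamma>' - of_int m'"
        using G_transfer[OF wG Hg(1)] by blast
      have t1: "p0 \<bullet> \<gamma> - of_int m = q \<bullet> \<gamma>' - of_int m'" using tr(2) wq by metis
      have t2: "w (s i p0) \<bullet> \<gamma> - of_int m = s i p0 \<bullet> \<gamma>' - of_int m'" using tr(2) by blast
      have t3: "w (v p0) \<bullet> \<gamma> - of_int m = v p0 \<bullet> \<gamma>' - of_int m'" using tr(2) by blast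
      have "(p0 \<bullet> \<gamma> - of_int m) * (w (s i p0) \<bullet> \<gamma> - of_int m) < 0"
        using sp unfolding Hg(2) sepH_hyp[OF R_nz[OF Hg(1)]] .
      then have neg: "(q \<bullet> \<gamma>' - of_int m') * (s i p0 \<bullet> \<gamma>' - of_int m') < 0" unfolding t1 t2 .
      have mnz: "m' \<noteq> 0"
      proof
        assume "m' = 0"
        then show False using neg claim[OF tr(1)] by simp
      qed
      have A: "(s i 0 \<bullet> \<gamma>' - of_int m') * (s i p0 \<bullet> \<gamma>' - of_int m') \<ge> 0"
        using G_closure_sign[OF G_s[OF i3] tr(1) z] .
      have B: "(v 0 \<bullet> \<gamma>' - of_int m') * (v p0 \<bullet> \<gamma>' - of_int m') \<ge> 0"
        using G_closure_sign[OF vG tr(1) z] .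
      have nz1: "s i p0 \<bullet> \<gamma>' - of_int m' \<noteq> 0" using G_off_hyp[OF G_s[OF i3] p0 tr(1)] by simp
      have nz2: "v p0 \<bullet> \<gamma>' - of_int m' \<noteq> 0" using G_off_hyp[OF vG p0 tr(1)] by simp
      have "(q \<bullet> \<gamma>' - of_int m') * (v p0 \<bullet> \<gamma>' - of_int m') < 0"
        by (rule sign3[OF neg, of "of_int m'"]) (use A B si0 v0 mnz nz1 nz2 in auto)
      then have "(p0 \<bullet> \<gamma> - of_int m) * (w (v p0) \<bullet> \<gamma> - of_int m) < 0" unfolding t1 t3 .
      then have "sepH H p0 (u p0)" unfolding Hg(2) sepH_hyp[OF R_nz[OF Hg(1)]] js(2) v_def by simp
      then show "H \<in> Sep u" unfolding Sep_def using HH by simp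
    qed
    then have "card (Sep (w \<circ> s i)) \<le> card (Sep u)" using Sep_finite by (rule card_mono[rotated])
    then show "len s (w \<circ> s i) \<le> len s u" using len_card[OF wsG] len_card[OF uG] by simp
  qed
qed

end



theorem proposition4p41:
  fixes R :: "vec2 set" and A0 :: "vec2 set" and s :: "nat \<Rightarrow> vec2 \<Rightarrow> vec2"
    and w :: "vec2 \<Rightarrow> vec2" and \<alpha> :: vec2 and c :: int and i :: nat
  assumes "root_system R"
    and "simple_system R A0 s"
    and "w \<in> affW R"
    and "\<alpha> \<in> R"
    and "w ` A0 \<subseteq> strip \<alpha> c" and "A0 \<subseteq> strip \<alpha> c"
    and "i \<in> {1, 2}"
    and "right_descents s w = {0, i}"
    and "s 0 \<circ> s i \<circ> s 0 \<circ> s i \<noteq> id"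
  shows "\<forall>u \<in> (\<lambda>v. w \<circ> v) ` W0 s. len s (w \<circ> s i) \<le> len s u"
proof -
  obtain \<beta>0 \<beta>1 \<beta>2 k0 where ss: "alcove R A0" "0 \<in> closure A0" "\<beta>0 \<in> R" "\<beta>1 \<in> R" "\<beta>2 \<in> R"
      "k0 \<noteq> 0" "wall R A0 (hyp \<beta>0 k0)" "wall R A0 (hyp \<beta>1 0)" "wall R A0 (hyp \<beta>2 0)"
      "hyp \<beta>1 0 \<noteq> hyp \<beta>2 0" "s 0 = refl \<beta>0 k0" "s 1 = refl \<beta>1 0" "s 2 = refl \<beta>2 0"
    using assms(2) unfolding simple_system_def by blast
  define bv where "bv = (\<lambda>j::nat. if j = 0 then \<beta>0 else if j = 1 then \<beta>1 else \<beta>2)"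
  define kk where "kk = (\<lambda>j::nat. if j = 0 then k0 else (0::int))"
  obtain p0 where p0: "p0 \<in> A0" using in_components_nonempty ss(1) unfolding alcove_def by blast
  have sd: "\<forall>j\<in>{0,1,2}. bv j \<in> R \<and> s j = refl (bv j) (kk j)"
    using ss unfolding bv_def kk_def by auto
  have wl: "\<forall>j\<in>{0,1,2}. wall R A0 (hyp (bv j) (kk j))"
    using ss unfolding bv_def kk_def by auto
  have sg: "\<forall>j\<in>{0,1,2}. \<exists>\<beta>\<in>R. \<exists>k::int. s j = refl \<beta> k"
  proof
    fix j :: nat assume "j \<in> {0,1,2}"
    then have "bv j \<in> R" "s j = refl (bv j) (kk j)" using sd by auto
    then show "\<exists>\<beta>\<in>R. \<exists>k::int. s j = refl \<beta> k" by blast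
  qed
  have inst: "aff0 R s A0 p0 bv kk"
    unfolding aff0_def aff_def aff0_axioms_def using assms(1) sg ss(1) p0 sd wl by blast
  show ?thesis
    by (rule aff0.main[OF inst ss(2)])
       (use ss assms(4-9) in \<open>simp_all add: bv_def kk_def\<close>)
qed

end
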